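(* Let $W$ be a Coxeter group, $w\in W$, $J\subseteq S$, and suppose $w=w^Jw_J$ is a Billey--Postnikov decomposition with $\supp(w^J)\cap\supp(w_J)=\{s\}$ for some $s\in S$. Then the middle multiplication map $\phi:x\mapsto x^J\,s\,x_J$ is a special matching of (the Hasse diagram of) the Bruhat interval $[e,w]$.
   Context: $(W,S)$ is a Coxeter system with length $\ell$, Bruhat order $\le$, identity $e$. For $J\subseteq S$, each $x$ factors uniquely as $x=x^Jx_J$ with $x_J\in W_J=\langle J\rangle$ and $x^J$ the minimal-length element of $xW_J$. $\supp(x)$ is the set of simple generators in a reduced word of $x$, $D_L(x)=\{s\in S:\ell(sx)<\ell(x)\}$. $w=w^Jw_J$ is a BP-decomposition if $\supp(w^J)\cap J\subseteq D_L(w_J)$. The Hasse diagram of a poset $P$ is the graph on $P$ whose edges are cover relations $x\lessdot y$; a perfect matching is a fixed-point-free involution $M$ with each $\{x,M(x)\}$ an edge; it is a special matching if for every cover $x\lessdot y$ either $M(x)=y$ or $M(x)<M(y)$. *)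

theory Defs
  imports "HOL-Algebra.Group"
begin

definition wprod :: "('a, 'b) monoid_scheme \<Rightarrow> 'a list \<Rightarrow> 'a" where
  "wprod G u = foldr (\<lambda>a b. a \<otimes>\<^bsub>G\<^esub> b) u \<one>\<^bsub>G\<^esub>"

text \<open>Relators of the Coxeter presentation: the words (s t)^n with (st)^n = 1 in G
  (for s = t, n = 1 this gives s s).  These generate the same normal subgroup as the
  relators (s t)^(m(s,t)), m(s,t) the order of st.\<close>
definition cox_relators :: "('a, 'b) monoid_scheme \<Rightarrow> 'a set \<Rightarrow> 'a list set" where
  "cox_relators G S = {concat (replicate n [s, t]) | s t n.
       s \<in> S \<and> t \<in> S \<and> (s \<otimes>\<^bsub>G\<^esub> t) [^]\<^bsub>G\<^esub> (n::nat) = \<one>\<^bsub>G\<^esub>}"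

inductive word_cong :: "'a list set \<Rightarrow> 'a list \<Rightarrow> 'a list \<Rightarrow> bool" for R where
  wc_refl: "word_cong R u u"
| wc_sym: "word_cong R u v \<Longrightarrow> word_cong R v u"
| wc_trans: "word_cong R u v \<Longrightarrow> word_cong R v x \<Longrightarrow> word_cong R u x"
| wc_del: "r \<in> R \<Longrightarrow> word_cong R (u @ r @ v) (u @ v)"

text \<open>(G,S) is a Coxeter system: S is a generating set of involutions of G and G has the
  presentation with generators S and relations s^2 = 1, (st)^{m(s,t)} = 1, i.e. two words
  in S have the same product exactly when they are congruent modulo these relations.\<close>
definition coxeter_system :: "('a, 'b) monoid_scheme \<Rightarrow> 'a set \<Rightarrow> bool" where
  "coxeter_system G S \<longleftrightarrow> group G \<and> S \<subseteq> carrier G \<and> \<one>\<^bsub>G\<^esub> \<notin> S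
     \<and> (\<forall>s\<in>S. s \<otimes>\<^bsub>G\<^esub> s = \<one>\<^bsub>G\<^esub>)
     \<and> carrier G = {wprod G u | u. u \<in> lists S}
     \<and> (\<forall>u\<in>lists S. \<forall>v\<in>lists S. wprod G u = wprod G v \<longrightarrow> word_cong (cox_relators G S) u v)"

definition clen :: "('a, 'b) monoid_scheme \<Rightarrow> 'a set \<Rightarrow> 'a \<Rightarrow> nat" where
  "clen G S w = (LEAST n. \<exists>u\<in>lists S. length u = n \<and> wprod G u = w)"

definition reduced_word :: "('a, 'b) monoid_scheme \<Rightarrow> 'a set \<Rightarrow> 'a list \<Rightarrow> 'a \<Rightarrow> bool" where
  "reduced_word G S u w \<longleftrightarrow> u \<in> lists S \<and> wprod G u = w \<and> length u = clen G S w"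

definition supp :: "('a, 'b) monoid_scheme \<Rightarrow> 'a set \<Rightarrow> 'a \<Rightarrow> 'a set" where
  "supp G S w = set (SOME u. reduced_word G S u w)"

definition left_descents :: "('a, 'b) monoid_scheme \<Rightarrow> 'a set \<Rightarrow> 'a \<Rightarrow> 'a set" where
  "left_descents G S w = {s \<in> S. clen G S (s \<otimes>\<^bsub>G\<^esub> w) < clen G S w}"

definition reflections :: "('a, 'b) monoid_scheme \<Rightarrow> 'a set \<Rightarrow> 'a set" where
  "reflections G S = {g \<otimes>\<^bsub>G\<^esub> s \<otimes>\<^bsub>G\<^esub> inv\<^bsub>G\<^esub> g | g s. g \<in> carrier G \<and> s \<in> S}"

definition bruhat_step :: "('a, 'b) monoid_scheme \<Rightarrow> 'a set \<Rightarrow> 'a \<Rightarrow> 'a \<Rightarrow> bool" where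
  "bruhat_step G S u w \<longleftrightarrow> u \<in> carrier G \<and>
     (\<exists>t\<in>reflections G S. w = u \<otimes>\<^bsub>G\<^esub> t) \<and> clen G S u < clen G S w"

definition bruhat_le :: "('a, 'b) monoid_scheme \<Rightarrow> 'a set \<Rightarrow> 'a \<Rightarrow> 'a \<Rightarrow> bool" where
  "bruhat_le G S u w \<longleftrightarrow> u \<in> carrier G \<and> w \<in> carrier G \<and> (bruhat_step G S)\<^sup>*\<^sup>* u w"

definition bruhat_interval :: "('a, 'b) monoid_scheme \<Rightarrow> 'a set \<Rightarrow> 'a \<Rightarrow> 'a \<Rightarrow> 'a set" where
  "bruhat_interval G S u w = {x. bruhat_le G S u x \<and> bruhat_le G S x w}"

definition parabolic :: "('a, 'b) monoid_scheme \<Rightarrow> 'a set \<Rightarrow> 'a set" where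
  "parabolic G J = {wprod G u | u. u \<in> lists J}"

definition par_min :: "('a, 'b) monoid_scheme \<Rightarrow> 'a set \<Rightarrow> 'a set \<Rightarrow> 'a \<Rightarrow> 'a" where
  "par_min G S J x = (THE y. y \<in> {x \<otimes>\<^bsub>G\<^esub> v | v. v \<in> parabolic G J} \<and>
      (\<forall>z \<in> {x \<otimes>\<^bsub>G\<^esub> v | v. v \<in> parabolic G J}. z \<noteq> y \<longrightarrow> clen G S y < clen G S z))"

definition par_comp :: "('a, 'b) monoid_scheme \<Rightarrow> 'a set \<Rightarrow> 'a set \<Rightarrow> 'a \<Rightarrow> 'a" where
  "par_comp G S J x = inv\<^bsub>G\<^esub> (par_min G S J x) \<otimes>\<^bsub>G\<^esub> x"

definition BP_decomposition :: "('a, 'b) monoid_scheme \<Rightarrow> 'a set \<Rightarrow> 'a set \<Rightarrow> 'a \<Rightarrow> bool" where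
  "BP_decomposition G S J w \<longleftrightarrow>
     supp G S (par_min G S J w) \<inter> J \<subseteq> left_descents G S (par_comp G S J w)"

definition covers_in :: "('a \<Rightarrow> 'a \<Rightarrow> bool) \<Rightarrow> 'a set \<Rightarrow> 'a \<Rightarrow> 'a \<Rightarrow> bool" where
  "covers_in leq P x y \<longleftrightarrow> x \<in> P \<and> y \<in> P \<and> leq x y \<and> x \<noteq> y \<and>
     \<not> (\<exists>z\<in>P. leq x z \<and> leq z y \<and> z \<noteq> x \<and> z \<noteq> y)"

definition perfect_matching :: "('a \<Rightarrow> 'a \<Rightarrow> bool) \<Rightarrow> 'a set \<Rightarrow> ('a \<Rightarrow> 'a) \<Rightarrow> bool" where
  "perfect_matching leq P M \<longleftrightarrow>
     (\<forall>x\<in>P. M x \<in> P \<and> M (M x) = x \<and> M x \<noteq> x \<and>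
             (covers_in leq P x (M x) \<or> covers_in leq P (M x) x))"

definition special_matching :: "('a \<Rightarrow> 'a \<Rightarrow> bool) \<Rightarrow> 'a set \<Rightarrow> ('a \<Rightarrow> 'a) \<Rightarrow> bool" where
  "special_matching leq P M \<longleftrightarrow> perfect_matching leq P M \<and>
     (\<forall>x y. covers_in leq P x y \<longrightarrow> M x = y \<or> (leq (M x) (M y) \<and> M x \<noteq> M y))"

end

theory Submission
  imports Defs "HOL-Library.Sublist"
begin

locale cox =
  fixes G (structure) and S :: "'a set"
  assumes cs: "coxeter_system G S"
begin

sublocale group G using cs unfolding coxeter_system_def by auto

abbreviation L where "L \<equiv> clen G S"

lemma S_carr: "S \<subseteq> carrier G" using cs unfolding coxeter_system_def by auto
lemma S_carr': "s \<in> S \<Longrightarrow> s \<in> carrier G" using S_carr by auto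
lemma one_notin: "\<one> \<notin> S" using cs unfolding coxeter_system_def by auto
lemma ss: "s \<in> S \<Longrightarrow> s \<otimes> s = \<one>" using cs unfolding coxeter_system_def by auto
lemma s_inv: "s \<in> S \<Longrightarrow> inv s = s"
  using ss S_carr' by (simp add: inv_equality)
lemma carrier_words: "carrier G = {wprod G u | u. u \<in> lists S}"
  using cs unfolding coxeter_system_def by auto
lemma words_cong: "u \<in> lists S \<Longrightarrow> v \<in> lists S \<Longrightarrow> wprod G u = wprod G v \<Longrightarrow> word_cong (cox_relators G S) u v"
  using cs unfolding coxeter_system_def by auto

lemma wprod_Nil[simp]: "wprod G [] = \<one>" by (simp add: wprod_def)
lemma wprod_Cons[simp]: "wprod G (a # u) = a \<otimes> wprod G u" by (simp add: wprod_def)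

lemma wprod_closed[simp]: "set u \<subseteq> carrier G \<Longrightarrow> wprod G u \<in> carrier G"
  by (induction u) auto

lemma wprod_closedS[simp]: "u \<in> lists S \<Longrightarrow> wprod G u \<in> carrier G"
  using S_carr by (intro wprod_closed) auto

lemma wprod_append: "set u \<subseteq> carrier G \<Longrightarrow> set v \<subseteq> carrier G \<Longrightarrow> wprod G (u @ v) = wprod G u \<otimes> wprod G v"
  by (induction u) (auto simp: m_assoc)

lemma wprod_appendS: "u \<in> lists S \<Longrightarrow> v \<in> lists S \<Longrightarrow> wprod G (u @ v) = wprod G u \<otimes> wprod G v"
  using S_carr by (intro wprod_append) auto

lemma wprod_rev: "u \<in> lists S \<Longrightarrow> wprod G (rev u) = inv (wprod G u)"
proof (induction u)
  case (Cons a u)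
  then have a: "a \<in> S" "u \<in> lists S" by auto
  have "rev u \<in> lists S" using a by auto
  then have "wprod G (rev (a # u)) = wprod G (rev u) \<otimes> wprod G [a]"
    using a by (simp add: wprod_appendS del: wprod_Cons)
  also have "\<dots> = inv (wprod G u) \<otimes> a" using Cons a S_carr' by simp
  also have "\<dots> = inv (a \<otimes> wprod G u)" using a S_carr' s_inv by (simp add: inv_mult_group)
  finally show ?case by simp
qed simp

lemma word_exists: "x \<in> carrier G \<Longrightarrow> \<exists>u\<in>lists S. wprod G u = x"
  using carrier_words by auto

lemma L_le: "u \<in> lists S \<Longrightarrow> L (wprod G u) \<le> length u"
  unfolding clen_def by (rule Least_le) auto

lemma reduced_exists: "x \<in> carrier G \<Longrightarrow> \<exists>u\<in>lists S. wprod G u = x \<and> length u = L x"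
proof -
  assume "x \<in> carrier G"
  then obtain u where "u \<in> lists S" "wprod G u = x" using word_exists by blast
  then have "\<exists>n. \<exists>u\<in>lists S. length u = n \<and> wprod G u = x" by blast
  from LeastI_ex[OF this] show ?thesis unfolding clen_def by blast
qed

lemma L_mult: "x \<in> carrier G \<Longrightarrow> y \<in> carrier G \<Longrightarrow> L (x \<otimes> y) \<le> L x + L y"
proof -
  assume "x \<in> carrier G" "y \<in> carrier G"
  then obtain u v where "u \<in> lists S" "v \<in> lists S" "wprod G u = x" "wprod G v = y" "length u = L x" "length v = L y"
    using reduced_exists by meson
  note u_v = this
  then have "u @ v \<in> lists S" "wprod G (u @ v) = x \<otimes> y" using wprod_appendS by auto
  then have "L (x \<otimes> y) \<le> length (u @ v)" using L_le by metis
  then show ?thesis using u_v by simp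
qed

lemma L_inv_le: "x \<in> carrier G \<Longrightarrow> L (inv x) \<le> L x"
proof -
  assume x: "x \<in> carrier G"
  obtain u where u: "u \<in> lists S" "wprod G u = x" "length u = L x" using reduced_exists x by blast
  have "rev u \<in> lists S" using u by auto
  then have "L (wprod G (rev u)) \<le> length u" using L_le[of "rev u"] by simp
  moreover have "wprod G (rev u) = inv x" using wprod_rev u by simp
  ultimately show ?thesis using u by simp
qed

lemma L_inv: "x \<in> carrier G \<Longrightarrow> L (inv x) = L x"
proof -
  assume x: "x \<in> carrier G"
  have "L (inv (inv x)) \<le> L (inv x)" using x by (intro L_inv_le) simp
  then have "L x \<le> L (inv x)" using x by simp
  then show ?thesis using L_inv_le[OF x] by linarith
qed

lemma L_one[simp]: "L \<one> = 0" using L_le[of "[]"] by simp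

lemma L_zero: "x \<in> carrier G \<Longrightarrow> L x = 0 \<Longrightarrow> x = \<one>"
proof -
  assume "x \<in> carrier G" "L x = 0"
  then obtain u where "wprod G u = x" "length u = 0" using reduced_exists by metis
  then show ?thesis by simp
qed

lemma L_S: "s \<in> S \<Longrightarrow> L s = 1"
proof -
  assume s: "s \<in> S"
  have "L (wprod G [s]) \<le> 1" using L_le[of "[s]"] s by simp
  then have "L s \<le> 1" using s S_carr' by simp
  moreover have "L s \<noteq> 0" using L_zero[of s] s one_notin S_carr' by auto
  ultimately show ?thesis by linarith
qed

lemma L_Sx: "s \<in> S \<Longrightarrow> x \<in> carrier G \<Longrightarrow> L (s \<otimes> x) \<le> L x + 1"
  using L_mult[of s x] L_S[of s] S_carr'[of s] by linarith

lemma L_Sx2: "s \<in> S \<Longrightarrow> x \<in> carrier G \<Longrightarrow> L x \<le> L (s \<otimes> x) + 1"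
proof -
  assume a: "s \<in> S" "x \<in> carrier G"
  have "x = s \<otimes> (s \<otimes> x)" using a ss S_carr' by (simp add: m_assoc[symmetric])
  then show ?thesis using L_Sx[of s "s \<otimes> x"] a S_carr' by simp
qed

end

context cox
begin

lemma lcancel_inv[simp]: "x \<in> carrier G \<Longrightarrow> y \<in> carrier G \<Longrightarrow> x \<otimes> (inv x \<otimes> y) = y"
  by (simp add: m_assoc[symmetric])
lemma lcancel_inv2[simp]: "x \<in> carrier G \<Longrightarrow> y \<in> carrier G \<Longrightarrow> inv x \<otimes> (x \<otimes> y) = y"
  by (simp add: m_assoc[symmetric])

definition cj :: "'a \<Rightarrow> 'a \<Rightarrow> 'a" where "cj g t = g \<otimes> t \<otimes> inv g"

lemma cj_closed[simp]: "g \<in> carrier G \<Longrightarrow> t \<in> carrier G \<Longrightarrow> cj g t \<in> carrier G"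
  by (simp add: cj_def)

lemma cj_cj: "g \<in> carrier G \<Longrightarrow> h \<in> carrier G \<Longrightarrow> t \<in> carrier G \<Longrightarrow> cj g (cj h t) = cj (g \<otimes> h) t"
  by (simp add: cj_def m_assoc inv_mult_group)

lemma cj_one[simp]: "t \<in> carrier G \<Longrightarrow> cj \<one> t = t"
  by (simp add: cj_def)

lemma cj_inv_iff: "g \<in> carrier G \<Longrightarrow> t \<in> carrier G \<Longrightarrow> x \<in> carrier G \<Longrightarrow> (cj g x = t) = (x = cj (inv g) t)"
proof
  assume a: "g \<in> carrier G" "t \<in> carrier G" "x \<in> carrier G" "cj g x = t"
  then have "cj (inv g) t = cj (inv g \<otimes> g) x" using cj_cj by auto
  then show "x = cj (inv g) t" using a by simp
next
  assume a: "g \<in> carrier G" "t \<in> carrier G" "x \<in> carrier G" "x = cj (inv g) t"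
  then have "cj g x = cj (g \<otimes> inv g) t" using cj_cj by auto
  then show "cj g x = t" using a by simp
qed

lemma count_map_cj: "set xs \<subseteq> carrier G \<Longrightarrow> g \<in> carrier G \<Longrightarrow> t \<in> carrier G \<Longrightarrow>
    count_list (map (cj g) xs) t = count_list xs (cj (inv g) t)"
proof (induction xs)
  case (Cons x xs)
  then show ?case using cj_inv_iff[of g t x] by auto
qed simp

fun rs :: "'a list \<Rightarrow> 'a list" where
  "rs [] = []"
| "rs (r # q) = r # map (cj r) (rs q)"

lemma rs_length[simp]: "length (rs q) = length q"
  by (induction q) auto

lemma rs_closed: "q \<in> lists S \<Longrightarrow> set (rs q) \<subseteq> carrier G"
proof (induction q)
  case (Cons r q) then show ?case using S_carr' by auto
qed simp

lemma map_cj_one: "set xs \<subseteq> carrier G \<Longrightarrow> map (cj \<one>) xs = xs"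
  by (induction xs) auto

lemma map_cj_cj: "set xs \<subseteq> carrier G \<Longrightarrow> g \<in> carrier G \<Longrightarrow> h \<in> carrier G \<Longrightarrow>
   map (cj g) (map (cj h) xs) = map (cj (g \<otimes> h)) xs"
  by (induction xs) (auto simp: cj_cj)

lemma rs_append: "p \<in> lists S \<Longrightarrow> q \<in> lists S \<Longrightarrow> rs (p @ q) = rs p @ map (cj (wprod G p)) (rs q)"
proof (induction p)
  case Nil
  then show ?case using map_cj_one[OF rs_closed[OF Nil(2)]] by simp
next
  case (Cons r p)
  then have r: "r \<in> carrier G" and p: "p \<in> lists S" using S_carr' by auto
  have IH: "rs (p @ q) = rs p @ map (cj (wprod G p)) (rs q)" using Cons p by blast
  have "map (cj r) (map (cj (wprod G p)) (rs q)) = map (cj (wprod G (r # p))) (rs q)"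
    using map_cj_cj[OF rs_closed[OF Cons(3)] r wprod_closedS[OF p]] by simp
  then show ?case using IH by simp
qed

lemma take_lists: "q \<in> lists S \<Longrightarrow> take i q \<in> lists S"
  by (meson in_lists_conv_set in_set_takeD)
lemma drop_lists: "q \<in> lists S \<Longrightarrow> drop i q \<in> lists S"
  by (meson in_lists_conv_set in_set_dropD)
lemma nth_S: "q \<in> lists S \<Longrightarrow> i < length q \<Longrightarrow> q ! i \<in> S"
  by auto

lemma rs_nth: "q \<in> lists S \<Longrightarrow> i < length q \<Longrightarrow> rs q ! i = cj (wprod G (take i q)) (q ! i)"
proof (induction q arbitrary: i)
  case (Cons r q)
  then have r: "r \<in> carrier G" and q: "q \<in> lists S" using S_carr' by auto
  show ?case
  proof (cases i)
    case 0 then show ?thesis using r by (simp add: cj_def s_inv)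
  next
    case (Suc j)
    then have "j < length q" using Cons by simp
    then have "rs (r # q) ! i = cj r (cj (wprod G (take j q)) (q ! j))" using Cons q Suc by simp
    also have "\<dots> = cj (wprod G (take i (r # q))) ((r # q) ! i)"
      using Suc r q \<open>j < length q\<close> S_carr'[OF nth_S[OF q \<open>j < length q\<close>]]
        cj_cj[of r "wprod G (take j q)" "q ! j"] wprod_closedS[OF take_lists[OF q, of j]] by simp
    finally show ?thesis .
  qed
qed simp

definition del :: "nat \<Rightarrow> 'a list \<Rightarrow> 'a list" where "del i q = take i q @ drop (Suc i) q"

lemma del_lists: "q \<in> lists S \<Longrightarrow> del i q \<in> lists S"
  unfolding del_def using take_lists drop_lists by auto

lemma del_length: "i < length q \<Longrightarrow> length (del i q) = length q - 1"
  unfolding del_def by simp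

lemma rs_del: assumes q: "q \<in> lists S" and i: "i < length q"
  shows "rs q ! i \<otimes> wprod G q = wprod G (del i q)"
proof -
  let ?P = "wprod G (take i q)" and ?s = "q ! i" and ?R = "wprod G (drop (Suc i) q)"
  have P: "?P \<in> carrier G" and R: "?R \<in> carrier G" and s: "?s \<in> S"
    using take_lists drop_lists q i by auto
  have sc: "?s \<in> carrier G" using s S_carr' by auto
  have "q = take i q @ [?s] @ drop (Suc i) q" using i by (simp add: Cons_nth_drop_Suc)
  then have "wprod G q = ?P \<otimes> wprod G ([?s] @ drop (Suc i) q)"
    using q s take_lists drop_lists wprod_appendS[of "take i q" "[?s] @ drop (Suc i) q"] by auto
  then have "wprod G q = ?P \<otimes> (?s \<otimes> ?R)" by simp
  then have "rs q ! i \<otimes> wprod G q = (?P \<otimes> ?s \<otimes> inv ?P) \<otimes> (?P \<otimes> (?s \<otimes> ?R))"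
    using rs_nth[OF q i] by (simp add: cj_def)
  also have "\<dots> = ?P \<otimes> (?s \<otimes> ?s) \<otimes> ?R" using P R sc by (simp add: m_assoc)
  also have "\<dots> = ?P \<otimes> ?R" using ss[OF s] P R by simp
  also have "\<dots> = wprod G (del i q)" unfolding del_def using wprod_appendS[OF take_lists[OF q] drop_lists[OF q]] by simp
  finally show ?thesis .
qed

end

context cox
begin

definition par :: "'a list \<Rightarrow> 'a \<Rightarrow> bool" where "par q t = odd (count_list (rs q) t)"

lemma par_append: assumes "p \<in> lists S" "q \<in> lists S" "t \<in> carrier G"
  shows "par (p @ q) t = (par p t \<noteq> par q (cj (inv (wprod G p)) t))"
proof -
  have "count_list (rs (p @ q)) t = count_list (rs p) t + count_list (rs q) (cj (inv (wprod G p)) t)"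
    using rs_append[OF assms(1,2)] count_map_cj[OF rs_closed[OF assms(2)] wprod_closedS[OF assms(1)] assms(3)]
    by simp
  then show ?thesis unfolding par_def by simp
qed

lemma par_Nil[simp]: "par [] t = False" by (simp add: par_def)

lemma par_single: "par [s] t = (t = s)" by (simp add: par_def)

subsection \<open>Relators\<close>

lemma pow_a_inv: assumes a: "a \<in> S" and b: "b \<in> S"
  shows "a \<otimes> inv ((a \<otimes> b) [^] (j::nat)) = (a \<otimes> b) [^] j \<otimes> a"
proof (induction j)
  case 0 then show ?case using a S_carr' by simp
next
  case (Suc j)
  let ?g = "a \<otimes> b"
  have ac: "a \<in> carrier G" and bc: "b \<in> carrier G" using a b S_carr' by auto
  have g: "?g \<in> carrier G" using ac bc by simp
  have ig: "inv ?g = b \<otimes> a" using ac bc s_inv a b by (simp add: inv_mult_group)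
  have "a \<otimes> inv (?g [^] Suc j) = a \<otimes> (inv ?g \<otimes> inv (?g [^] j))"
    using g by (simp add: inv_mult_group)
  also have "\<dots> = (a \<otimes> inv ?g) \<otimes> inv (?g [^] j)" using g ac by (simp add: m_assoc)
  also have "a \<otimes> inv ?g = ?g \<otimes> a" using ig ac bc by (simp add: m_assoc)
  also have "?g \<otimes> a \<otimes> inv (?g [^] j) = ?g \<otimes> (a \<otimes> inv (?g [^] j))" using g ac by (simp add: m_assoc)
  also have "\<dots> = ?g \<otimes> ((a \<otimes> b) [^] j \<otimes> a)" using Suc by simp
  also have "\<dots> = ?g [^] Suc j \<otimes> a" using g ac nat_pow_Suc2[OF g, of j] by (simp add: m_assoc del: nat_pow_Suc)
  finally show ?case .
qed

lemma wprod_rep: assumes a: "a \<in> S" and b: "b \<in> S"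
  shows "wprod G (concat (replicate j [a, b])) = (a \<otimes> b) [^] j"
proof (induction j)
  case (Suc j)
  have ac: "a \<in> carrier G" and bc: "b \<in> carrier G" using a b S_carr' by auto
  have "wprod G (concat (replicate (Suc j) [a, b])) = a \<otimes> (b \<otimes> (a \<otimes> b) [^] j)"
    using Suc by simp
  also have "\<dots> = (a \<otimes> b) [^] Suc j" using ac bc nat_pow_Suc2[of "a \<otimes> b" j] by (simp add: m_assoc del: nat_pow_Suc)
  finally show ?case .
qed simp

lemma rep_lists: "a \<in> S \<Longrightarrow> b \<in> S \<Longrightarrow> concat (replicate j [a, b]) \<in> lists S"
  by (induction j) auto

lemma rs_rep: assumes a: "a \<in> S" and b: "b \<in> S"
  shows "rs (concat (replicate j [a, b])) = map (\<lambda>k. (a \<otimes> b) [^] k \<otimes> a) [0..<2*j]"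
proof (induction j)
  case (Suc j)
  let ?g = "a \<otimes> b" and ?X = "concat (replicate j [a, b])"
  have ac: "a \<in> carrier G" and bc: "b \<in> carrier G" using a b S_carr' by auto
  have g: "?g \<in> carrier G" using ac bc by simp
  have X: "?X \<in> lists S" using rep_lists a b by blast
  have e: "concat (replicate (Suc j) [a, b]) = ?X @ [a, b]"
  proof -
    have "concat (replicate i u) @ u = u @ concat (replicate i u)" for i and u :: "'a list"
      by (induction i) auto
    then show ?thesis by simp
  qed
  have ab: "[a, b] \<in> lists S" using a b by simp
  have E1: "rs (concat (replicate (Suc j) [a, b])) = rs ?X @ map (cj (?g [^] j)) (rs [a, b])"
    unfolding e using rs_append[OF X ab] wprod_rep[OF a b] by simp
  have E2: "map (cj (?g [^] j)) (rs [a, b]) = [cj (?g [^] j) a, cj (?g [^] j) (cj a b)]" by simp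
  have E3: "cj (?g [^] j) a = ?g [^] (2*j) \<otimes> a"
  proof -
    have "cj (?g [^] j) a = ?g [^] j \<otimes> (a \<otimes> inv (?g [^] j))" using g ac by (simp add: cj_def m_assoc)
    also have "\<dots> = ?g [^] j \<otimes> (?g [^] j \<otimes> a)" using pow_a_inv[OF a b] by simp
    also have "\<dots> = ?g [^] (2*j) \<otimes> a" using g ac by (simp add: m_assoc[symmetric] nat_pow_mult mult_2)
    finally show ?thesis .
  qed
  have E4: "cj (?g [^] j) (cj a b) = ?g [^] (2*j+1) \<otimes> a"
  proof -
    have "cj (?g [^] j) (cj a b) = ?g [^] j \<otimes> ?g \<otimes> (a \<otimes> inv (?g [^] j))"
      using g ac bc s_inv[OF a] by (simp add: cj_def m_assoc)
    also have "\<dots> = ?g [^] j \<otimes> ?g \<otimes> (?g [^] j \<otimes> a)" using pow_a_inv[OF a b] by simp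
    also have "\<dots> = (?g [^] Suc j \<otimes> ?g [^] j) \<otimes> a" using g ac by (simp add: m_assoc)
    also have "\<dots> = ?g [^] (Suc j + j) \<otimes> a" using g by (simp only: nat_pow_mult)
    also have "Suc j + j = 2*j+1" by simp
    finally show ?thesis .
  qed
  have E5: "[0..<2*Suc j] = [0..<2*j] @ [2*j, 2*j+1]" by simp
  have E6: "rs (concat (replicate (Suc j) [a, b])) = map (\<lambda>k. ?g [^] k \<otimes> a) [0..<2*j] @ [?g [^] (2*j) \<otimes> a, ?g [^] (2*j+1) \<otimes> a]"
    by (simp only: E1 E2 E3 E4 Suc)
  have E7: "map (\<lambda>k. ?g [^] k \<otimes> a) ([0..<2*j] @ [2*j, 2*j+1]) = map (\<lambda>k. ?g [^] k \<otimes> a) [0..<2*j] @ [?g [^] (2*j) \<otimes> a, ?g [^] (2*j+1) \<otimes> a]"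
    by (simp only: map_append list.map)
  show ?case by (simp only: E5 E6 E7)
qed simp

lemma count_periodic: assumes "\<And>k. f (k + n) = f k"
  shows "count_list (map f [0..<2*n]) t = 2 * count_list (map f [0..<n]) t"
proof -
  have e1: "[0..<2*n] = [0..<n] @ [n..<n+n]" using upt_add_eq_append[of 0 n n] by (simp add: mult_2)
  have e2: "[n..<n+n] = map (\<lambda>i. i + n) [0..<n]" using map_add_upt[of n n] by simp
  have e3: "map f (map (\<lambda>i. i + n) [0..<n]) = map f [0..<n]" unfolding map_map o_def assms ..
  show ?thesis unfolding e1 e2 map_append e3 count_list_append by simp
qed

lemma rel_even: assumes "r \<in> cox_relators G S"
  shows "r \<in> lists S \<and> wprod G r = \<one> \<and> (\<forall>t. \<not> par r t)"
proof -
  obtain a b n where ab: "a \<in> S" "b \<in> S" "(a \<otimes> b) [^] (n::nat) = \<one>" and r: "r = concat (replicate n [a, b])"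
    using assms unfolding cox_relators_def by blast
  let ?g = "a \<otimes> b"
  have g: "?g \<in> carrier G" using ab S_carr' by auto
  have per: "?g [^] (k + n) \<otimes> a = ?g [^] k \<otimes> a" for k
    using g ab(3) by (simp add: nat_pow_mult[symmetric])
  have "\<not> par r t" for t
    unfolding par_def r rs_rep[OF ab(1,2)] count_periodic[of "\<lambda>k. ?g [^] k \<otimes> a", OF per] by simp
  then show ?thesis using rep_lists[OF ab(1,2)] wprod_rep[OF ab(1,2)] ab(3) r by simp
qed

lemma wc_inv: "word_cong (cox_relators G S) u v \<Longrightarrow>
   (u \<in> lists S \<longleftrightarrow> v \<in> lists S) \<and> (u \<in> lists S \<longrightarrow> (\<forall>t\<in>carrier G. par u t = par v t))"
proof (induction rule: word_cong.induct)
  case (wc_del r u v)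
  have r: "r \<in> lists S" "wprod G r = \<one>" "\<And>t. \<not> par r t" using rel_even[OF wc_del] by auto
  have l: "(u @ r @ v \<in> lists S) = (u @ v \<in> lists S)" using r by auto
  have "par (u @ r @ v) t = par (u @ v) t" if "u @ v \<in> lists S" "t \<in> carrier G" for t
  proof -
    have uv: "u \<in> lists S" "v \<in> lists S" using that by auto
    have rv: "r @ v \<in> lists S" using uv r by auto
    have c: "cj (inv (wprod G u)) t \<in> carrier G" using uv that by simp
    have "par (r @ v) (cj (inv (wprod G u)) t) = par v (cj (inv (wprod G u)) t)"
      using par_append[OF r(1) uv(2) c] r cj_one[OF c] by simp
    then show ?thesis using par_append[OF uv(1) rv that(2)] par_append[OF uv that(2)] by simp
  qed
  then show ?case using l by auto
qed auto

definition Nf :: "'a \<Rightarrow> 'a \<Rightarrow> bool" where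
  "Nf x t = par (SOME q. q \<in> lists S \<and> wprod G q = x) t"

lemma Nf_word: assumes "q \<in> lists S" "t \<in> carrier G" shows "Nf (wprod G q) t = par q t"
proof -
  let ?q = "SOME q'. q' \<in> lists S \<and> wprod G q' = wprod G q"
  have "?q \<in> lists S \<and> wprod G ?q = wprod G q" by (rule someI[of _ q]) (use assms in auto)
  then have "word_cong (cox_relators G S) ?q q" using words_cong assms by blast
  then show ?thesis using wc_inv assms unfolding Nf_def by blast
qed

lemma Nf_mult: assumes x: "x \<in> carrier G" and y: "y \<in> carrier G" and t: "t \<in> carrier G"
  shows "Nf (x \<otimes> y) t = (Nf x t \<noteq> Nf y (cj (inv x) t))"
proof -
  obtain p q where p: "p \<in> lists S" "wprod G p = x" and q: "q \<in> lists S" "wprod G q = y"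
    using word_exists x y by metis
  have "Nf (x \<otimes> y) t = par (p @ q) t" using Nf_word[of "p @ q" t] p q t wprod_appendS by simp
  also have "\<dots> = (par p t \<noteq> par q (cj (inv x) t))" using par_append[OF p(1) q(1) t] p by simp
  finally have "Nf (x \<otimes> y) t = (par p t \<noteq> par q (cj (inv x) t))" .
  moreover have "Nf x t = par p t" using Nf_word[OF p(1) t] p by simp
  moreover have "Nf y (cj (inv x) t) = par q (cj (inv x) t)" using Nf_word[OF q(1)] q t x by simp
  ultimately show ?thesis by simp
qed

lemma Nf_one: "t \<in> carrier G \<Longrightarrow> Nf \<one> t = False"
  using Nf_word[of "[]" t] by simp

lemma Nf_S: "s \<in> S \<Longrightarrow> t \<in> carrier G \<Longrightarrow> Nf s t = (t = s)"
  using Nf_word[of "[s]" t] S_carr' by (simp add: par_single)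

subsection \<open>Reflections\<close>

abbreviation T where "T \<equiv> reflections G S"

lemma T_def2: "t \<in> T \<longleftrightarrow> (\<exists>g\<in>carrier G. \<exists>s\<in>S. t = cj g s)"
  unfolding reflections_def cj_def by auto

lemma T_carr: "t \<in> T \<Longrightarrow> t \<in> carrier G"
  using T_def2 S_carr' by auto

lemma S_T: "s \<in> S \<Longrightarrow> s \<in> T"
  using T_def2[of s] S_carr' by (metis cj_one one_closed)

lemma T_cj: "t \<in> T \<Longrightarrow> g \<in> carrier G \<Longrightarrow> cj g t \<in> T"
proof -
  assume "t \<in> T" "g \<in> carrier G"
  then obtain h s where "h \<in> carrier G" "s \<in> S" "t = cj h s" using T_def2 by auto
  then show ?thesis using T_def2 \<open>g \<in> carrier G\<close> cj_cj S_carr' by (metis m_closed)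
qed

lemma T_invol: "t \<in> T \<Longrightarrow> t \<otimes> t = \<one>"
proof -
  assume "t \<in> T"
  then obtain h s where h: "h \<in> carrier G" "s \<in> S" "t = cj h s" using T_def2 by auto
  have sc: "s \<in> carrier G" using h S_carr' by auto
  have "t \<otimes> t = h \<otimes> s \<otimes> (inv h \<otimes> h) \<otimes> s \<otimes> inv h" using h sc by (simp add: cj_def m_assoc)
  also have "\<dots> = h \<otimes> (s \<otimes> s) \<otimes> inv h" using h sc by (simp add: m_assoc)
  finally show ?thesis using ss h by simp
qed

lemma T_inv: "t \<in> T \<Longrightarrow> inv t = t"
  using T_invol T_carr by (simp add: inv_equality)

lemma T_ttx: "t \<in> T \<Longrightarrow> x \<in> carrier G \<Longrightarrow> t \<otimes> (t \<otimes> x) = x"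
  using T_invol T_carr by (simp add: m_assoc[symmetric])

lemma Nf_self: assumes "t \<in> T" shows "Nf t t"
proof -
  obtain g s where g: "g \<in> carrier G" "s \<in> S" "t = cj g s" using assms T_def2 by auto
  have sc: "s \<in> carrier G" using g S_carr' by auto
  have tc: "t \<in> carrier G" using assms T_carr by auto
  have e1: "t = (g \<otimes> s) \<otimes> inv g" using g by (simp add: cj_def)
  have e2: "cj (inv (g \<otimes> s)) t = s"
  proof -
    have "cj (inv (g \<otimes> s)) t = s \<otimes> (inv g \<otimes> g) \<otimes> s \<otimes> (inv g \<otimes> g) \<otimes> s"
      using g sc s_inv[OF g(2)] by (simp add: cj_def inv_mult_group m_assoc)
    also have "\<dots> = s \<otimes> s \<otimes> s" using g sc by simp
    finally show ?thesis using ss[OF g(2)] sc by simp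
  qed
  have e3: "cj (inv g) t = s" using g sc cj_cj by (simp add: cj_cj)
  have A: "Nf t t = (Nf (g \<otimes> s) t \<noteq> Nf (inv g) s)"
    using Nf_mult[of "g \<otimes> s" "inv g" t] e1 e2 g sc tc by simp
  have B: "Nf (g \<otimes> s) t = (Nf g t \<noteq> True)"
    using Nf_mult[of g s t] e3 g sc tc Nf_S[OF g(2), of s] by simp
  have C: "Nf (inv g) s = Nf g t"
    using Nf_mult[of g "inv g" t] e3 g tc Nf_one by simp
  show ?thesis using A B C by simp
qed

lemma par_exchange: assumes q: "q \<in> lists S" and t: "t \<in> carrier G" and p: "par q t"
  shows "\<exists>i<length q. t \<otimes> wprod G q = wprod G (del i q)"
proof -
  have "count_list (rs q) t \<noteq> 0" using p unfolding par_def by (metis even_zero)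
  then have "t \<in> set (rs q)" using count_list_0_iff by metis
  then obtain i where "i < length q" "rs q ! i = t" by (auto simp: in_set_conv_nth)
  then show ?thesis using rs_del[OF q] by blast
qed

lemma L_T_lt: assumes t: "t \<in> T" and w: "w \<in> carrier G" and n: "Nf w t"
  shows "L (t \<otimes> w) < L w"
proof -
  obtain q where q: "q \<in> lists S" "wprod G q = w" "length q = L w" using reduced_exists w by blast
  have "par q t" using n Nf_word q T_carr t by auto
  then obtain i where i: "i < length q" "t \<otimes> w = wprod G (del i q)"
    using par_exchange q T_carr t by blast
  have "L (t \<otimes> w) \<le> length (del i q)" using i L_le del_lists q by metis
  then show ?thesis using del_length[OF i(1)] i q by simp
qed

lemma L_T_iff: assumes t: "t \<in> T" and w: "w \<in> carrier G"
  shows "L (t \<otimes> w) < L w \<longleftrightarrow> Nf w t"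
proof
  assume l: "L (t \<otimes> w) < L w"
  show "Nf w t"
  proof (rule ccontr)
    assume nn: "\<not> Nf w t"
    have tc: "t \<in> carrier G" using t T_carr by auto
    have tw: "t \<otimes> w \<in> carrier G" using tc w by simp
    have "Nf w t = Nf (t \<otimes> (t \<otimes> w)) t" using T_ttx t w by simp
    also have "\<dots> = (Nf t t \<noteq> Nf (t \<otimes> w) (cj (inv t) t))" using Nf_mult tc tw by blast
    also have "cj (inv t) t = t" using T_inv[OF t] T_invol[OF t] tc by (simp add: cj_def)
    finally have "Nf (t \<otimes> w) t" using nn Nf_self[OF t] by simp
    then have "L (t \<otimes> (t \<otimes> w)) < L (t \<otimes> w)" using L_T_lt t tw by blast
    then show False using l T_ttx t w by simp
  qed
qed (use L_T_lt t w in blast)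

lemma L_T_neq: assumes t: "t \<in> T" and w: "w \<in> carrier G"
  shows "L (t \<otimes> w) \<noteq> L w"
proof
  assume e: "L (t \<otimes> w) = L w"
  have tc: "t \<in> carrier G" using t T_carr by auto
  have tw: "t \<otimes> w \<in> carrier G" using tc w by simp
  have "Nf w t = (Nf t t \<noteq> Nf (t \<otimes> w) (cj (inv t) t))"
    using Nf_mult[OF tc tw tc] T_ttx t w by simp
  moreover have "cj (inv t) t = t" using T_inv[OF t] T_invol[OF t] tc by (simp add: cj_def)
  ultimately have "Nf w t \<or> Nf (t \<otimes> w) t" using Nf_self[OF t] by auto
  then show False
    using L_T_iff[OF t w] L_T_iff[OF t tw] e T_ttx[OF t w] by auto
qed

lemma strong_exchange: assumes q: "q \<in> lists S" and t: "t \<in> T" and l: "L (t \<otimes> wprod G q) < L (wprod G q)"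
  shows "\<exists>i<length q. t \<otimes> wprod G q = wprod G (del i q)"
proof -
  have "Nf (wprod G q) t" using L_T_iff t l q by simp
  then have "par q t" using Nf_word q T_carr t by auto
  then show ?thesis using par_exchange q T_carr t by blast
qed

end

context cox
begin

abbreviation le (infix "\<preceq>" 50) where "x \<preceq> y \<equiv> bruhat_le G S x y"

lemma subseq_trans: "subseq a b \<Longrightarrow> subseq b c \<Longrightarrow> subseq a c"
  using list_emb_trans[of a b c "(=)"] by blast

lemma subseq_del: "subseq (del i q) q"
proof (induction q arbitrary: i)
  case (Cons a q)
  show ?case
  proof (cases i)
    case 0 then show ?thesis by (simp add: del_def list_emb_Cons subseq_order.refl)
  next
    case (Suc k)
    then have e: "del i (a # q) = a # del k q" by (simp add: del_def)
    have "subseq (a # del k q) (a # q)" by (rule list_emb_Cons2[OF refl Cons.IH])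
    then show ?thesis by (simp only: e)
  qed
qed (simp add: del_def)

lemma subseq_set: "subseq p q \<Longrightarrow> set p \<subseteq> set q"
  by (induction rule: list_emb.induct) auto

lemma subseq_lists: "subseq p q \<Longrightarrow> q \<in> lists S \<Longrightarrow> p \<in> lists S"
  using subseq_set by blast

lemma step_carr: "bruhat_step G S u w \<Longrightarrow> u \<in> carrier G \<and> w \<in> carrier G"
  unfolding bruhat_step_def using T_carr by auto

lemma step_L: "bruhat_step G S u w \<Longrightarrow> L u < L w"
  unfolding bruhat_step_def by auto

lemma rt_L: "(bruhat_step G S)\<^sup>*\<^sup>* u w \<Longrightarrow> L u \<le> L w \<and> (u \<noteq> w \<longrightarrow> L u < L w)"
proof (induction rule: rtranclp_induct)
  case (step y z) then show ?case using step_L[of y z] by auto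
qed simp

lemma le_L: "x \<preceq> y \<Longrightarrow> L x \<le> L y"
  unfolding bruhat_le_def using rt_L by blast

lemma le_L_strict: "x \<preceq> y \<Longrightarrow> x \<noteq> y \<Longrightarrow> L x < L y"
  unfolding bruhat_le_def using rt_L by blast

lemma le_refl: "x \<in> carrier G \<Longrightarrow> x \<preceq> x"
  unfolding bruhat_le_def by simp

lemma le_trans: "x \<preceq> y \<Longrightarrow> y \<preceq> z \<Longrightarrow> x \<preceq> z"
  unfolding bruhat_le_def by auto

lemma le_antisym: "x \<preceq> y \<Longrightarrow> y \<preceq> x \<Longrightarrow> x = y"
  using le_L_strict le_L by fastforce

lemma le_carr: "x \<preceq> y \<Longrightarrow> x \<in> carrier G \<and> y \<in> carrier G"
  unfolding bruhat_le_def by auto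

lemma le_right: "t \<in> T \<Longrightarrow> x \<in> carrier G \<Longrightarrow> L x < L (x \<otimes> t) \<Longrightarrow> x \<preceq> x \<otimes> t"
  unfolding bruhat_le_def bruhat_step_def using T_carr by (intro conjI r_into_rtranclp) auto

lemma cj_T_left: assumes "t \<in> T" "x \<in> carrier G" shows "t \<otimes> x = x \<otimes> cj (inv x) t" "cj (inv x) t \<in> T"
proof -
  show "t \<otimes> x = x \<otimes> cj (inv x) t" using assms T_carr by (simp add: cj_def m_assoc[symmetric])
  show "cj (inv x) t \<in> T" using T_cj assms by simp
qed

lemma cj_T_right: assumes "t \<in> T" "x \<in> carrier G" shows "x \<otimes> t = cj x t \<otimes> x" "cj x t \<in> T"
proof -
  show "x \<otimes> t = cj x t \<otimes> x" using assms T_carr by (simp add: cj_def m_assoc)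
  show "cj x t \<in> T" using T_cj assms by simp
qed

lemma le_left: "t \<in> T \<Longrightarrow> x \<in> carrier G \<Longrightarrow> L x < L (t \<otimes> x) \<Longrightarrow> x \<preceq> t \<otimes> x"
  using le_right cj_T_left by metis

lemma L_Tr_neq: "t \<in> T \<Longrightarrow> x \<in> carrier G \<Longrightarrow> L (x \<otimes> t) \<noteq> L x"
  using L_T_neq cj_T_right by metis

lemma le_S_left: "s \<in> S \<Longrightarrow> x \<in> carrier G \<Longrightarrow> L x < L (s \<otimes> x) \<Longrightarrow> x \<preceq> s \<otimes> x"
  using le_left S_T by blast

lemma le_S_left': "s \<in> S \<Longrightarrow> x \<in> carrier G \<Longrightarrow> L (s \<otimes> x) < L x \<Longrightarrow> s \<otimes> x \<preceq> x"
  using le_left[of s "s \<otimes> x"] S_T T_ttx S_carr' by simp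

lemma Sx_cases: "s \<in> S \<Longrightarrow> x \<in> carrier G \<Longrightarrow> L (s \<otimes> x) = L x + 1 \<or> L x = L (s \<otimes> x) + 1"
  using L_T_neq[of s x] S_T L_Sx L_Sx2 by fastforce

lemma lemmaA: assumes st: "bruhat_step G S x y" and r: "r \<in> S"
  shows "r \<otimes> x \<preceq> r \<otimes> y \<or> r \<otimes> x \<preceq> y"
proof -
  obtain t where t: "t \<in> T" "y = x \<otimes> t" and l: "L x < L y" and x: "x \<in> carrier G"
    using st unfolding bruhat_step_def by auto
  have tc: "t \<in> carrier G" using t T_carr by auto
  have rc: "r \<in> carrier G" using r S_carr' by auto
  have y: "y \<in> carrier G" using x tc t by simp
  have e: "r \<otimes> y = (r \<otimes> x) \<otimes> t" using t x tc rc by (simp add: m_assoc)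
  have rx: "r \<otimes> x \<in> carrier G" using rc x by simp
  have ry: "r \<otimes> y \<in> carrier G" using rc y by simp
  have ne: "L (r \<otimes> y) \<noteq> L (r \<otimes> x)" using L_Tr_neq[OF t(1) rx] e by simp
  show ?thesis
  proof (cases "L (r \<otimes> x) < L (r \<otimes> y)")
    case True
    then show ?thesis using le_right[OF t(1) rx] e by simp
  next
    case False
    then have lt: "L (r \<otimes> y) < L (r \<otimes> x)" using ne by simp
    show ?thesis
    proof (cases "L (r \<otimes> x) < L x")
      case True
      then have "r \<otimes> x \<preceq> x" using le_S_left'[OF r x] by simp
      moreover have "x \<preceq> y" using le_right[OF t(1) x] t l by simp
      ultimately show ?thesis using le_trans by blast
    next
      case False
      then have A: "L (r \<otimes> x) = L x + 1" using Sx_cases[OF r x] by auto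
      have B: "L y = L (r \<otimes> y) + 1" using Sx_cases[OF r y] lt A l by auto
      obtain q where q: "q \<in> lists S" "wprod G q = r \<otimes> y" "length q = L (r \<otimes> y)"
        using reduced_exists ry by blast
      have rq: "r # q \<in> lists S" "wprod G (r # q) = y" using q r rc y T_ttx[OF S_T[OF r] y] by auto
      have t': "cj y t \<in> T" and e2: "y \<otimes> t = cj y t \<otimes> y" using cj_T_right[OF t(1) y] by auto
      have xy: "x = y \<otimes> t" using t x tc T_invol[OF t(1)] by (simp add: m_assoc)
      have "L (cj y t \<otimes> wprod G (r # q)) < L (wprod G (r # q))" using rq xy e2 l by simp
      then obtain i where i: "i < length (r # q)" "cj y t \<otimes> wprod G (r # q) = wprod G (del i (r # q))"
        using strong_exchange[OF rq(1) t'] by blast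
      have xw: "x = wprod G (del i (r # q))" using i rq xy e2 by simp
      show ?thesis
      proof (cases i)
        case 0
        then have "x = r \<otimes> y" using xw q by (simp add: del_def)
        then have "r \<otimes> x = y" using T_ttx[OF S_T[OF r] y] by simp
        then show ?thesis using le_refl y by simp
      next
        case (Suc k)
        then have k: "k < length q" using i by simp
        have "del i (r # q) = r # del k q" using Suc by (simp add: del_def)
        then have "x = r \<otimes> wprod G (del k q)" using xw by simp
        then have "r \<otimes> x = wprod G (del k q)" using T_ttx[OF S_T[OF r]] del_lists q by simp
        then have "L (r \<otimes> x) \<le> length q - 1" using L_le[OF del_lists[OF q(1)], of k] del_length[OF k] by simp
        then show ?thesis using A B q(3) l lt by linarith
      qed
    qed
  qed
qed

lemma lemmaR: assumes "u \<preceq> w" and r: "r \<in> S"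
  shows "r \<otimes> u \<preceq> w \<or> r \<otimes> u \<preceq> r \<otimes> w"
proof -
  have w: "w \<in> carrier G" using assms(1) le_carr by auto
  have "(bruhat_step G S)\<^sup>*\<^sup>* u w" using assms(1) unfolding bruhat_le_def by auto
  then show ?thesis
  proof (induction rule: converse_rtranclp_induct)
    case base
    then show ?case using le_refl r w S_carr' by simp
  next
    case (step u v)
    have uv: "u \<preceq> v" using step(1) step_carr unfolding bruhat_le_def by auto
    have vw: "v \<preceq> w" using step(2) step_carr[OF step(1)] w unfolding bruhat_le_def by auto
    from lemmaA[OF step(1) r] step(3) show ?case using le_trans vw by blast
  qed
qed

lemma reduced_Cons: assumes "r # q \<in> lists S" "length (r # q) = L (wprod G (r # q))"
  shows "length q = L (wprod G q)"
proof -
  have q: "q \<in> lists S" "r \<in> S" using assms by auto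
  have "L (wprod G (r # q)) \<le> L (wprod G q) + 1" using L_Sx q by simp
  moreover have "L (wprod G q) \<le> length q" using L_le q by simp
  ultimately show ?thesis using assms(2) by simp
qed

lemma subword_le: "q \<in> lists S \<Longrightarrow> length q = L (wprod G q) \<Longrightarrow> subseq p q \<Longrightarrow> wprod G p \<preceq> wprod G q"
proof (induction q arbitrary: p)
  case Nil
  then have "p = []" using list_emb_Nil2 by blast
  then show ?case using le_refl by simp
next
  case (Cons r q)
  have q: "q \<in> lists S" "r \<in> S" "length q = L (wprod G q)" using Cons reduced_Cons by auto
  have wq: "wprod G q \<in> carrier G" using q by simp
  have up: "wprod G q \<preceq> wprod G (r # q)"
    using le_S_left[OF q(2) wq] Cons(3) q(3) by simp
  consider "subseq p q" | p' where "p = r # p'" "subseq p' q"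
    using Cons(4) by (cases p) (auto split: if_splits)
  then show ?case
  proof cases
    case 1 then show ?thesis using Cons q up le_trans by blast
  next
    case 2
    then have "wprod G p' \<preceq> wprod G q" using Cons q by blast
    from lemmaR[OF this q(2)] show ?thesis using 2 up le_trans by auto
  qed
qed

lemma le_subword: assumes "u \<preceq> w"
  shows "\<And>q. q \<in> lists S \<Longrightarrow> wprod G q = w \<Longrightarrow> \<exists>p. subseq p q \<and> wprod G p = u"
proof -
  have "(bruhat_step G S)\<^sup>*\<^sup>* u w" using assms unfolding bruhat_le_def by auto
  then show "\<And>q. q \<in> lists S \<Longrightarrow> wprod G q = w \<Longrightarrow> \<exists>p. subseq p q \<and> wprod G p = u"
  proof (induction rule: rtranclp_induct)
    case base
    then show ?case by blast
  next
    case (step y z)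
    obtain t where t: "t \<in> T" "z = y \<otimes> t" and l: "L y < L z" and y: "y \<in> carrier G"
      using step(2) unfolding bruhat_step_def by auto
    have tc: "t \<in> carrier G" using t T_carr by auto
    have z: "z \<in> carrier G" using y tc t by simp
    have t': "cj z t \<in> T" and e2: "z \<otimes> t = cj z t \<otimes> z" using cj_T_right[OF t(1) z] by auto
    have yz: "y = z \<otimes> t" using t y tc T_invol[OF t(1)] by (simp add: m_assoc)
    have "L (cj z t \<otimes> wprod G q) < L (wprod G q)" using step.prems yz e2 l by simp
    then obtain i where i: "cj z t \<otimes> wprod G q = wprod G (del i q)"
      using strong_exchange[OF step.prems(1) t'] by blast
    have "y = wprod G (del i q)" using i step.prems yz e2 by simp
    then obtain p where "subseq p (del i q)" "wprod G p = u" using step.prems(1) del_lists step.IH by metis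
    then show ?case using subseq_del subseq_trans by blast
  qed
qed

lemma one_le: assumes "x \<in> carrier G" shows "\<one> \<preceq> x"
proof -
  obtain q where q: "q \<in> lists S" "wprod G q = x" "length q = L x" using reduced_exists assms by blast
  then show ?thesis using subword_le[of q "[]"] by simp
qed

end

context cox
begin

definition red :: "'a list \<Rightarrow> bool" where "red q \<longleftrightarrow> q \<in> lists S \<and> length q = L (wprod G q)"

lemma red_exists: "x \<in> carrier G \<Longrightarrow> \<exists>q. red q \<and> wprod G q = x"
  using reduced_exists unfolding red_def by metis

lemma red_append: assumes "red p" "red q" "L (wprod G p \<otimes> wprod G q) = L (wprod G p) + L (wprod G q)"
  shows "red (p @ q)"
  using assms wprod_appendS unfolding red_def by auto

lemma red_Cons: "red (r # q) \<Longrightarrow> red q"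
  using reduced_Cons unfolding red_def by auto

lemma red_Cons_intro: assumes "red q" "r \<in> S" "L (r \<otimes> wprod G q) = L (wprod G q) + 1"
  shows "red (r # q)"
  using assms unfolding red_def by auto

lemma strong_exchange_right: assumes q: "q \<in> lists S" and t: "t \<in> T" and l: "L (wprod G q \<otimes> t) < L (wprod G q)"
  shows "\<exists>i<length q. wprod G q \<otimes> t = wprod G (del i q)"
proof -
  have w: "wprod G q \<in> carrier G" using q by simp
  have "wprod G q \<otimes> t = cj (wprod G q) t \<otimes> wprod G q" "cj (wprod G q) t \<in> T"
    using cj_T_right[OF t w] by auto
  then show ?thesis using strong_exchange[OF q, of "cj (wprod G q) t"] l by simp
qed

lemma reduced_subword: "q \<in> lists S \<Longrightarrow> \<exists>p. subseq p q \<and> red p \<and> wprod G p = wprod G q"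
proof (induction q)
  case Nil
  then show ?case by (auto simp: red_def)
next
  case (Cons r q)
  then have r: "r \<in> S" and q: "q \<in> lists S" by auto
  then obtain p where p: "subseq p q" "red p" "wprod G p = wprod G q" using Cons by blast
  let ?x = "wprod G q"
  have x: "?x \<in> carrier G" using q by simp
  show ?case
  proof (cases "L (r \<otimes> ?x) = L ?x + 1")
    case True
    then have "red (r # p)" using red_Cons_intro[OF p(2) r] p(3) by simp
    then show ?thesis using p by auto
  next
    case False
    then have l: "L ?x = L (r \<otimes> ?x) + 1" using Sx_cases[OF r x] by auto
    have pl: "p \<in> lists S" using p red_def by auto
    have "L (r \<otimes> wprod G p) < L (wprod G p)" using l p by simp
    then obtain i where i: "i < length p" "r \<otimes> wprod G p = wprod G (del i p)"
      using strong_exchange[OF pl S_T[OF r]] by blast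
    have "red (del i p)"
      using i l p del_length[OF i(1)] del_lists[OF pl] unfolding red_def by auto
    moreover have "subseq (del i p) (r # q)"
      using subseq_trans[OF subseq_del p(1)] by (simp add: list_emb_Cons)
    ultimately show ?thesis using i p by auto
  qed
qed

subsection \<open>Lifting\<close>

lemma decomp: assumes s: "s \<in> S" and w: "w \<in> carrier G" and l: "L (s \<otimes> w) < L w" and x: "x \<preceq> w"
  shows "x \<preceq> s \<otimes> w \<or> s \<otimes> x \<preceq> s \<otimes> w"
proof -
  have sw: "s \<otimes> w \<in> carrier G" using s w S_carr' by simp
  obtain q where q: "red q" "wprod G q = s \<otimes> w" using red_exists sw by blast
  have l2: "L w = L (s \<otimes> w) + 1" using Sx_cases[OF s w] l by auto
  have sq: "wprod G (s # q) = w" using q T_ttx[OF S_T[OF s] w] by simp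
  have rq: "red (s # q)" using q s l2 sq unfolding red_def by auto
  obtain p where p: "subseq p (s # q)" "wprod G p = x"
    using le_subword[OF x, of "s # q"] rq sq unfolding red_def by blast
  have ql: "q \<in> lists S" "length q = L (wprod G q)" using q red_def by auto
  consider "subseq p q" | p' where "p = s # p'" "subseq p' q"
    using p(1) by (cases p) (auto split: if_splits)
  then show ?thesis
  proof cases
    case 1 then show ?thesis using subword_le[OF ql 1] p q by simp
  next
    case 2
    have "wprod G p' \<preceq> s \<otimes> w" using subword_le[OF ql 2(2)] q by simp
    moreover have "s \<otimes> x = wprod G p'" using 2 p T_ttx[OF S_T[OF s] wprod_closedS[OF subseq_lists[OF 2(2) ql(1)]]] by auto
    ultimately show ?thesis by simp
  qed
qed

lemma lifting: assumes s: "s \<in> S" and x: "x \<preceq> w" and lw: "L (s \<otimes> w) < L w" and lx: "L x < L (s \<otimes> x)"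
  shows "s \<otimes> x \<preceq> w \<and> x \<preceq> s \<otimes> w"
proof -
  have w: "w \<in> carrier G" and xc: "x \<in> carrier G" using x le_carr by auto
  have sw: "s \<otimes> w \<preceq> w" using le_S_left'[OF s w lw] .
  have xsx: "x \<preceq> s \<otimes> x" using le_S_left[OF s xc lx] .
  consider "x \<preceq> s \<otimes> w" | "s \<otimes> x \<preceq> s \<otimes> w" using decomp[OF s w lw x] by blast
  then show ?thesis
  proof cases
    case 1
    from lemmaR[OF 1 s] have "s \<otimes> x \<preceq> w" using T_ttx[OF S_T[OF s] w] sw le_trans by auto
    then show ?thesis using 1 by simp
  next
    case 2
    then show ?thesis using sw xsx le_trans by blast
  qed
qed

lemma Z_down: assumes s: "s \<in> S" and x: "x \<preceq> w" and lw: "L (s \<otimes> w) < L w" and lx: "L (s \<otimes> x) < L x"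
  shows "s \<otimes> x \<preceq> s \<otimes> w"
proof -
  have w: "w \<in> carrier G" and xc: "x \<in> carrier G" using x le_carr by auto
  have "s \<otimes> x \<preceq> x" using le_S_left'[OF s xc lx] .
  then show ?thesis using decomp[OF s w lw x] le_trans by blast
qed

lemma Z_up: assumes s: "s \<in> S" and x: "x \<preceq> w" and lw: "L w < L (s \<otimes> w)"
  shows "s \<otimes> x \<preceq> s \<otimes> w"
proof -
  have w: "w \<in> carrier G" using x le_carr by auto
  have "w \<preceq> s \<otimes> w" using le_S_left[OF s w lw] .
  then show ?thesis using lemmaR[OF x s] le_trans by blast
qed

lemma left_mult_cover: assumes s: "s \<in> S" and bd: "b \<preceq> d" and ne: "b \<noteq> d"
  and cov: "\<And>z. b \<preceq> z \<Longrightarrow> z \<preceq> d \<Longrightarrow> z = b \<or> z = d"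
  shows "s \<otimes> b = d \<or> (s \<otimes> b \<preceq> s \<otimes> d \<and> s \<otimes> b \<noteq> s \<otimes> d)"
proof -
  have b: "b \<in> carrier G" and d: "d \<in> carrier G" using bd le_carr by auto
  have sc: "s \<in> carrier G" using s S_carr' by auto
  have neq: "s \<otimes> b \<noteq> s \<otimes> d" using ne b d sc by simp
  consider "L (s \<otimes> b) < L b" "L (s \<otimes> d) < L d" | "L b < L (s \<otimes> b)" "L d < L (s \<otimes> d)"
    | "L (s \<otimes> b) < L b" "L d < L (s \<otimes> d)" | "L b < L (s \<otimes> b)" "L (s \<otimes> d) < L d"
    using L_T_neq[OF S_T[OF s] b] L_T_neq[OF S_T[OF s] d] by linarith
  then show ?thesis
  proof cases
    case 1 then show ?thesis using Z_down[OF s bd] neq by blast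
  next
    case 2 then show ?thesis using Z_up[OF s bd] neq by blast
  next
    case 3
    have "s \<otimes> b \<preceq> b" using le_S_left'[OF s b 3(1)] .
    moreover have "d \<preceq> s \<otimes> d" using le_S_left[OF s d 3(2)] .
    ultimately show ?thesis using bd le_trans neq by blast
  next
    case 4
    have "s \<otimes> b \<preceq> d" using lifting[OF s bd 4(2) 4(1)] by blast
    moreover have "b \<preceq> s \<otimes> b" using le_S_left[OF s b 4(1)] .
    moreover have "s \<otimes> b \<noteq> b" using 4 by auto
    ultimately show ?thesis using cov by blast
  qed
qed

subsection \<open>Reduced factorizations\<close>

lemma factor_le: assumes p: "p \<in> carrier G" and q: "q \<in> carrier G" and l: "L (p \<otimes> q) = L p + L q"
  and x: "x \<preceq> p \<otimes> q"
  shows "\<exists>p' q'. p' \<preceq> p \<and> q' \<preceq> q \<and> x = p' \<otimes> q'"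
proof -
  obtain a b where a: "red a" "wprod G a = p" and b: "red b" "wprod G b = q"
    using red_exists p q by metis
  have ab: "red (a @ b)" using red_append[OF a(1) b(1)] a b l by simp
  have wab: "wprod G (a @ b) = p \<otimes> q" using a b wprod_appendS red_def by auto
  obtain c where c: "subseq c (a @ b)" "wprod G c = x" using le_subword[OF x, of "a @ b"] ab wab red_def by blast
  then obtain c1 c2 where c12: "c = c1 @ c2" "subseq c1 a" "subseq c2 b" by (auto elim: subseq_appendE)
  have al: "a \<in> lists S" "b \<in> lists S" using a b red_def by auto
  have "wprod G c1 \<preceq> p" using subword_le[OF al(1) _ c12(2)] a red_def by auto
  moreover have "wprod G c2 \<preceq> q" using subword_le[OF al(2) _ c12(3)] b red_def by auto
  moreover have "x = wprod G c1 \<otimes> wprod G c2"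
    using c c12 wprod_appendS subseq_lists al by metis
  ultimately show ?thesis by blast
qed

lemma le_factor: assumes l: "L (p \<otimes> q) = L p + L q" and pp: "p' \<preceq> p" and qq: "q' \<preceq> q"
  shows "p' \<otimes> q' \<preceq> p \<otimes> q"
proof -
  have p: "p \<in> carrier G" and q: "q \<in> carrier G" using pp qq le_carr by auto
  obtain a b where a: "red a" "wprod G a = p" and b: "red b" "wprod G b = q"
    using red_exists p q by metis
  have ab: "red (a @ b)" using red_append[OF a(1) b(1)] a b l by simp
  have wab: "wprod G (a @ b) = p \<otimes> q" using a b wprod_appendS red_def by auto
  have al: "a \<in> lists S" "b \<in> lists S" using a b red_def by auto
  obtain c1 where c1: "subseq c1 a" "wprod G c1 = p'" using le_subword[OF pp al(1)] a by blast
  obtain c2 where c2: "subseq c2 b" "wprod G c2 = q'" using le_subword[OF qq al(2)] b by blast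
  have "subseq (c1 @ c2) (a @ b)" using c1 c2 list_emb_append_mono by blast
  then have "wprod G (c1 @ c2) \<preceq> p \<otimes> q" using subword_le ab wab red_def by metis
  then show ?thesis using c1 c2 wprod_appendS subseq_lists al by metis
qed

subsection \<open>Support\<close>

lemma red_set: assumes "red u" shows "set u = {s \<in> S. s \<preceq> wprod G u}"
proof
  have ul: "u \<in> lists S" "length u = L (wprod G u)" using assms red_def by auto
  show "set u \<subseteq> {s \<in> S. s \<preceq> wprod G u}"
  proof
    fix s assume s: "s \<in> set u"
    then have "subseq [s] u" by (simp add: subseq_singleton_left)
    then have "wprod G [s] \<preceq> wprod G u" using subword_le ul by blast
    then show "s \<in> {s \<in> S. s \<preceq> wprod G u}" using s ul S_carr' by auto
  qed
  show "{s \<in> S. s \<preceq> wprod G u} \<subseteq> set u"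
  proof
    fix s assume "s \<in> {s \<in> S. s \<preceq> wprod G u}"
    then have s: "s \<in> S" "s \<preceq> wprod G u" by auto
    obtain p where p: "subseq p u" "wprod G p = s" using le_subword[OF s(2) ul(1)] by blast
    obtain p0 where p0: "subseq p0 p" "red p0" "wprod G p0 = s"
      using reduced_subword[OF subseq_lists[OF p(1) ul(1)]] p by auto
    have "length p0 = 1" using p0 L_S[OF s(1)] red_def by auto
    then obtain r where "p0 = [r]" by (cases p0) auto
    then have "r = s" using p0 red_def S_carr' by auto
    then have "s \<in> set p0" using \<open>p0 = [r]\<close> by simp
    then show "s \<in> set u" using subseq_set p0(1) p(1) by blast
  qed
qed

lemma supp_eq: assumes x: "x \<in> carrier G" shows "supp G S x = {s \<in> S. s \<preceq> x}"
proof -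
  have ex: "\<exists>u. reduced_word G S u x" using reduced_exists[OF x] unfolding reduced_word_def by metis
  let ?u = "SOME u. reduced_word G S u x"
  have "reduced_word G S ?u x" using someI_ex[OF ex] .
  then have "red ?u" "wprod G ?u = x" unfolding reduced_word_def red_def by auto
  then show ?thesis unfolding supp_def using red_set by metis
qed

lemma supp_red: "red u \<Longrightarrow> supp G S (wprod G u) = set u"
  using supp_eq red_set red_def by simp

lemma supp_mono: "x \<preceq> y \<Longrightarrow> supp G S x \<subseteq> supp G S y"
  using supp_eq le_carr le_trans by auto

lemma supp_S: "x \<in> carrier G \<Longrightarrow> supp G S x \<subseteq> S"
  using supp_eq by auto

lemma desc_supp: assumes s: "s \<in> S" and x: "x \<in> carrier G" and l: "L (s \<otimes> x) < L x"
  shows "s \<in> supp G S x"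
proof -
  have "s \<otimes> (s \<otimes> x) = x" using T_ttx[OF S_T[OF s] x] .
  have "\<one> \<preceq> s \<otimes> x" using one_le s x S_carr' by simp
  then have "s \<otimes> \<one> \<preceq> s \<otimes> (s \<otimes> x) \<or> s \<otimes> \<one> \<preceq> s \<otimes> x" using lemmaR[OF _ s] by blast
  then have "s \<preceq> x" using T_ttx[OF S_T[OF s] x] le_S_left'[OF s x l] le_trans s S_carr' by auto
  then show ?thesis using supp_eq[OF x] s by simp
qed

lemma supp_sub_single: assumes x: "x \<in> carrier G" and sub: "supp G S x \<subseteq> {s}"
  shows "x = \<one> \<or> x = s"
proof -
  obtain u where u: "red u" "wprod G u = x" using red_exists x by blast
  have su: "set u \<subseteq> {s}" using supp_red[OF u(1)] u sub by simp
  show ?thesis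
  proof (cases u)
    case Nil then show ?thesis using u by simp
  next
    case (Cons a u')
    then have a: "a = s" using su by auto
    show ?thesis
    proof (cases u')
      case Nil then show ?thesis using u Cons a red_def S_carr' by auto
    next
      case (Cons b u'')
      have b: "b = s" using su Cons \<open>u = a # u'\<close> by auto
      have sS: "s \<in> S" using u \<open>u = a # u'\<close> a red_def by auto
      have u'': "u'' \<in> lists S" using u \<open>u = a # u'\<close> Cons red_def by auto
      have "x = s \<otimes> (s \<otimes> wprod G u'')" using u \<open>u = a # u'\<close> Cons a b by simp
      then have "x = wprod G u''" using T_ttx[OF S_T[OF sS]] u'' by simp
      then have "L x \<le> length u''" using L_le[OF u''] by simp
      then show ?thesis using u \<open>u = a # u'\<close> Cons red_def by simp
    qed
  qed
qed

end

context cox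
begin

abbreviation WJ where "WJ J \<equiv> parabolic G J"

lemma WJ_intro: "u \<in> lists J \<Longrightarrow> wprod G u \<in> WJ J"
  unfolding parabolic_def by blast

lemma WJ_iff: assumes J: "J \<subseteq> S"
  shows "v \<in> WJ J \<longleftrightarrow> v \<in> carrier G \<and> supp G S v \<subseteq> J"
proof
  assume "v \<in> WJ J"
  then obtain u where u: "u \<in> lists J" "wprod G u = v" unfolding parabolic_def by auto
  have uS: "u \<in> lists S" using u J by auto
  obtain p where p: "subseq p u" "red p" "wprod G p = v" using reduced_subword[OF uS] u by auto
  have "set p \<subseteq> J" using subseq_set[OF p(1)] u(1) by auto
  moreover have "v \<in> carrier G" using wprod_closedS[OF uS] u(2) by simp
  ultimately show "v \<in> carrier G \<and> supp G S v \<subseteq> J" using supp_red[OF p(2)] p by auto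
next
  assume v: "v \<in> carrier G \<and> supp G S v \<subseteq> J"
  obtain u where u: "red u" "wprod G u = v" using red_exists v by blast
  then have "u \<in> lists J" using supp_red[OF u(1)] v by auto
  then show "v \<in> WJ J" using u WJ_intro by metis
qed

lemma WJ_carr: "J \<subseteq> S \<Longrightarrow> v \<in> WJ J \<Longrightarrow> v \<in> carrier G"
  using WJ_iff by blast

lemma WJ_one: "\<one> \<in> WJ J"
  unfolding parabolic_def by (auto intro: exI[of _ "[]"])

lemma WJ_S: "J \<subseteq> S \<Longrightarrow> s \<in> J \<Longrightarrow> s \<in> WJ J"
proof -
  assume "J \<subseteq> S" "s \<in> J"
  then have "[s] \<in> lists J" by simp
  then have "wprod G [s] \<in> WJ J" by (rule WJ_intro)
  moreover have "wprod G [s] = s" using S_carr' \<open>J \<subseteq> S\<close> \<open>s \<in> J\<close> by auto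
  ultimately show ?thesis by simp
qed

lemma WJ_mult: assumes J: "J \<subseteq> S" shows "u \<in> WJ J \<Longrightarrow> v \<in> WJ J \<Longrightarrow> u \<otimes> v \<in> WJ J"
proof -
  assume "u \<in> WJ J" "v \<in> WJ J"
  then obtain p q where "p \<in> lists J" "q \<in> lists J" "wprod G p = u" "wprod G q = v"
    unfolding parabolic_def by auto
  moreover have "p @ q \<in> lists J" using calculation by auto
  moreover have "wprod G (p @ q) = u \<otimes> v" using calculation J wprod_appendS by (metis lists_mono subsetD)
  ultimately show ?thesis using WJ_intro by metis
qed

lemma WJ_inv: assumes J: "J \<subseteq> S" shows "u \<in> WJ J \<Longrightarrow> inv u \<in> WJ J"
proof -
  assume "u \<in> WJ J"
  then obtain p where p: "p \<in> lists J" "wprod G p = u" unfolding parabolic_def by auto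
  have "rev p \<in> lists J" using p by auto
  moreover have "wprod G (rev p) = inv u" using wprod_rev p J by (metis lists_mono subsetD)
  ultimately show ?thesis using WJ_intro by metis
qed

definition minrep :: "'a set \<Rightarrow> 'a \<Rightarrow> bool" where
  "minrep J a \<longleftrightarrow> a \<in> carrier G \<and> (\<forall>v\<in>WJ J. L a \<le> L (a \<otimes> v))"

lemma red_appendD: assumes "red (p @ q)" shows "red p" "red q"
proof -
  have pq: "p \<in> lists S" "q \<in> lists S" using assms red_def by auto
  have "L (wprod G (p @ q)) \<le> L (wprod G p) + L (wprod G q)" using L_mult pq wprod_appendS by simp
  moreover have "L (wprod G p) \<le> length p" "L (wprod G q) \<le> length q" using L_le pq by auto
  ultimately show "red p" "red q" using assms pq unfolding red_def by auto
qed

lemma del_append1: "i < length p \<Longrightarrow> del i (p @ q) = del i p @ q"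
  unfolding del_def by simp

lemma del_append2: "length p \<le> i \<Longrightarrow> del i (p @ q) = p @ del (i - length p) q"
  unfolding del_def by (simp add: Suc_diff_le)

lemma Sx_cases_right: "r \<in> S \<Longrightarrow> x \<in> carrier G \<Longrightarrow> L (x \<otimes> r) = L x + 1 \<or> L x = L (x \<otimes> r) + 1"
proof -
  assume r: "r \<in> S" and x: "x \<in> carrier G"
  have rc: "r \<in> carrier G" using r S_carr' by auto
  have "L (x \<otimes> r) \<le> L x + L r" using L_mult x rc by simp
  moreover have "L x \<le> L (x \<otimes> r) + L r"
    using L_mult[of "x \<otimes> r" r] x rc T_invol[OF S_T[OF r]] by (simp add: m_assoc)
  moreover have "L (x \<otimes> r) \<noteq> L x" using L_Tr_neq[OF S_T[OF r] x] .
  ultimately show ?thesis using L_S[OF r] by linarith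
qed

lemma minrep_add_word: assumes J: "J \<subseteq> S" and a: "minrep J a"
  shows "red u \<Longrightarrow> set u \<subseteq> J \<Longrightarrow> L (a \<otimes> wprod G u) = L a + length u"
proof (induction u rule: rev_induct)
  case Nil
  then show ?case using a minrep_def by simp
next
  case (snoc r u')
  have ac: "a \<in> carrier G" using a minrep_def by auto
  have ru: "red u'" using red_appendD(1)[OF snoc(2)] .
  have r: "r \<in> J" "r \<in> S" using snoc(3) J by auto
  have u'l: "u' \<in> lists S" using ru red_def by auto
  have IH: "L (a \<otimes> wprod G u') = L a + length u'" using snoc ru by auto
  let ?X = "a \<otimes> wprod G u'"
  have X: "?X \<in> carrier G" using ac u'l by simp
  have rc: "r \<in> carrier G" using r S_carr' by auto
  have e: "a \<otimes> wprod G (u' @ [r]) = ?X \<otimes> r" using wprod_appendS[OF u'l, of "[r]"] r ac u'l rc by (simp add: m_assoc)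
  show ?case
  proof (cases "L (?X \<otimes> r) = L ?X + 1")
    case True then show ?thesis using e IH by simp
  next
    case False
    then have lt: "L (?X \<otimes> r) < L ?X" using Sx_cases_right[OF r(2) X] by auto
    obtain wa where wa: "red wa" "wprod G wa = a" using red_exists ac by blast
    have wal: "wa \<in> lists S" using wa red_def by auto
    have wX: "wprod G (wa @ u') = ?X" using wprod_appendS[OF wal u'l] wa by simp
    have wl: "wa @ u' \<in> lists S" using wal u'l by simp
    obtain i where i: "i < length (wa @ u')" "?X \<otimes> r = wprod G (del i (wa @ u'))"
      using strong_exchange_right[OF wl S_T[OF r(2)]] lt wX by auto
    show ?thesis
    proof (cases "i < length wa")
      case True
      let ?a1 = "wprod G (del i wa)"
      have a1l: "del i wa \<in> lists S" using del_lists wal by blast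
      have "?X \<otimes> r = ?a1 \<otimes> wprod G u'" using i del_append1[OF True] wprod_appendS[OF a1l u'l] by simp
      have La1: "L ?a1 < L a" using L_le[OF a1l] del_length[OF True] wa red_def True by fastforce
      let ?v = "wprod G u' \<otimes> r \<otimes> inv (wprod G u')"
      have vJ: "?v \<in> WJ J"
      proof -
        have "u' \<in> lists J" using snoc(3) by auto
        then have "wprod G u' \<in> WJ J" by (rule WJ_intro)
        then show ?thesis using WJ_mult[OF J] WJ_inv[OF J] WJ_S[OF J r(1)] by blast
      qed
      have a1: "?a1 \<in> carrier G" using a1l by simp
      have wu: "wprod G u' \<in> carrier G" using u'l by simp
      have "a \<otimes> ?v = ?X \<otimes> r \<otimes> inv (wprod G u')" using ac wu rc by (simp add: m_assoc)
      also have "\<dots> = ?a1" using \<open>?X \<otimes> r = ?a1 \<otimes> wprod G u'\<close> a1 wu by (simp add: m_assoc)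
      finally have "L a \<le> L ?a1" using a vJ minrep_def by metis
      then show ?thesis using La1 by simp
    next
      case False
      let ?k = "i - length wa"
      have k: "?k < length u'" using i False by simp
      have dl: "del ?k u' \<in> lists S" using del_lists u'l by blast
      have "?X \<otimes> r = a \<otimes> wprod G (del ?k u')"
        using i del_append2[of wa i u'] False wprod_appendS[OF wal dl] wa by simp
      then have "a \<otimes> wprod G (u' @ [r]) = a \<otimes> wprod G (del ?k u')" using e by simp
      moreover have "wprod G (u' @ [r]) \<in> carrier G" "wprod G (del ?k u') \<in> carrier G"
        using dl snoc(2) red_def by auto
      ultimately have "wprod G (u' @ [r]) = wprod G (del ?k u')" using ac by (simp add: Units_eq)
      then have "L (wprod G (u' @ [r])) \<le> length u' - 1" using L_le[OF dl] del_length[OF k] by simp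
      moreover have "length (u' @ [r]) = L (wprod G (u' @ [r]))" using snoc(2) red_def by blast
      ultimately show ?thesis by simp
    qed
  qed
qed

lemma minrep_add: assumes J: "J \<subseteq> S" and a: "minrep J a" and v: "v \<in> WJ J"
  shows "L (a \<otimes> v) = L a + L v"
proof -
  obtain u where u: "red u" "wprod G u = v" using red_exists WJ_carr[OF J v] by blast
  have "set u \<subseteq> J" using supp_red[OF u(1)] u WJ_iff[OF J] v by auto
  then show ?thesis using minrep_add_word[OF J a u(1)] u red_def by simp
qed

lemma minrep_exists: assumes J: "J \<subseteq> S" and x: "x \<in> carrier G"
  shows "\<exists>a v. minrep J a \<and> v \<in> WJ J \<and> x = a \<otimes> v"
proof -
  let ?P = "\<lambda>n. \<exists>v\<in>WJ J. L (x \<otimes> v) = n"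
  have ex: "\<exists>n. ?P n" using WJ_one by blast
  obtain v0 where v0: "v0 \<in> WJ J" "L (x \<otimes> v0) = (LEAST n. ?P n)" using LeastI_ex[OF ex] by blast
  have v0c: "v0 \<in> carrier G" using WJ_carr[OF J v0(1)] .
  let ?a = "x \<otimes> v0"
  have "minrep J ?a"
    unfolding minrep_def
  proof (intro conjI ballI)
    show "?a \<in> carrier G" using x v0c by simp
    fix v assume v: "v \<in> WJ J"
    have e: "?a \<otimes> v = x \<otimes> (v0 \<otimes> v)" using x v0c WJ_carr[OF J v] by (simp add: m_assoc)
    have m: "v0 \<otimes> v \<in> WJ J" using WJ_mult[OF J v0(1) v] .
    have "?P (L (?a \<otimes> v))" by (rule bexI[OF _ m]) (rule arg_cong[where f=L, OF e[symmetric]])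
    from Least_le[of ?P, OF this] show "L ?a \<le> L (?a \<otimes> v)" using v0(2) by simp
  qed
  moreover have "inv v0 \<in> WJ J" using WJ_inv[OF J v0(1)] .
  moreover have "x = ?a \<otimes> inv v0" using x v0c by (simp add: m_assoc)
  ultimately show ?thesis by blast
qed

lemma minrep_unique: assumes J: "J \<subseteq> S" and a: "minrep J a" and a': "minrep J a'"
  and v: "v \<in> WJ J" and v': "v' \<in> WJ J" and e: "a \<otimes> v = a' \<otimes> v'"
  shows "a = a' \<and> v = v'"
proof -
  have ac: "a \<in> carrier G" and a'c: "a' \<in> carrier G" using a a' minrep_def by auto
  have vc: "v \<in> carrier G" and v'c: "v' \<in> carrier G" using WJ_carr J v v' by auto
  let ?w = "v \<otimes> inv v'"
  have w: "?w \<in> WJ J" using WJ_mult[OF J v WJ_inv[OF J v']] .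
  have wc: "?w \<in> carrier G" using vc v'c by simp
  have e1: "a' = a \<otimes> ?w" using e ac a'c vc v'c by (metis inv_solve_right m_assoc inv_closed m_closed)
  have e2: "a = a' \<otimes> inv ?w" using e1 ac wc by (simp add: m_assoc)
  have "L a' = L a + L ?w" using minrep_add[OF J a w] e1 by simp
  moreover have "L a = L a' + L (inv ?w)" using minrep_add[OF J a' WJ_inv[OF J w]] e2 by simp
  moreover have "L (inv ?w) = L ?w" using L_inv wc by simp
  ultimately have "L ?w = 0" by simp
  then have "?w = \<one>" using L_zero wc by simp
  then have "v = v'" using vc v'c by (metis inv_equality inv_inv inv_closed)
  moreover have "a = a'" using e1 \<open>?w = \<one>\<close> ac by simp
  ultimately show ?thesis by simp
qed

lemma par_min_eq: assumes J: "J \<subseteq> S" and a: "minrep J a" and v: "v \<in> WJ J"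
  shows "par_min G S J (a \<otimes> v) = a"
proof -
  have ac: "a \<in> carrier G" using a minrep_def by auto
  have vc: "v \<in> carrier G" using WJ_carr J v by auto
  let ?C = "{a \<otimes> v \<otimes> u | u. u \<in> WJ J}"
  have inC: "a \<in> ?C"
  proof -
    have "a = a \<otimes> v \<otimes> inv v" using ac vc by (simp add: m_assoc)
    then show ?thesis using WJ_inv[OF J v] by blast
  qed
  have minprop: "\<forall>z\<in>?C. z \<noteq> a \<longrightarrow> L a < L z"
  proof (intro ballI impI)
    fix z assume "z \<in> ?C" "z \<noteq> a"
    then obtain u where u: "u \<in> WJ J" "z = a \<otimes> v \<otimes> u" by blast
    have uc: "u \<in> carrier G" using WJ_carr J u by auto
    have z: "z = a \<otimes> (v \<otimes> u)" using u ac vc uc by (simp add: m_assoc)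
    have vu: "v \<otimes> u \<in> WJ J" using WJ_mult[OF J v u(1)] .
    have "v \<otimes> u \<noteq> \<one>" using z \<open>z \<noteq> a\<close> ac by auto
    then have "L (v \<otimes> u) \<noteq> 0" using L_zero vc uc by auto
    then show "L a < L z" using minrep_add[OF J a vu] z by simp
  qed
  show ?thesis unfolding par_min_def
  proof (rule the_equality)
    show "a \<in> ?C \<and> (\<forall>z\<in>?C. z \<noteq> a \<longrightarrow> L a < L z)" using inC minprop by blast
  next
    fix y assume y: "y \<in> ?C \<and> (\<forall>z\<in>?C. z \<noteq> y \<longrightarrow> L y < L z)"
    show "y = a"
    proof (rule ccontr)
      assume "y \<noteq> a"
      then have "L y < L a" "L a < L y" using y inC minprop by auto
      then show False by simp
    qed
  qed
qed

lemma par_comp_eq: assumes J: "J \<subseteq> S" and a: "minrep J a" and v: "v \<in> WJ J"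
  shows "par_comp G S J (a \<otimes> v) = v"
proof -
  have ac: "a \<in> carrier G" using a minrep_def by auto
  have vc: "v \<in> carrier G" using WJ_carr J v by auto
  show ?thesis unfolding par_comp_def par_min_eq[OF J a v] using ac vc by simp
qed

lemma par_decomp: assumes J: "J \<subseteq> S" and x: "x \<in> carrier G"
  shows "minrep J (par_min G S J x) \<and> par_comp G S J x \<in> WJ J \<and> x = par_min G S J x \<otimes> par_comp G S J x"
proof -
  obtain a v where "minrep J a" "v \<in> WJ J" "x = a \<otimes> v" using minrep_exists[OF J x] by blast
  then show ?thesis using par_min_eq[OF J] par_comp_eq[OF J] by simp
qed

end

context cox
begin

lemma MR_le: assumes J: "J \<subseteq> S" and a: "minrep J a" and v: "v \<in> WJ J"
  shows "a \<preceq> a \<otimes> v \<and> v \<preceq> a \<otimes> v"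
proof -
  have ac: "a \<in> carrier G" using a minrep_def by auto
  have vc: "v \<in> carrier G" using WJ_carr[OF J v] .
  have l: "L (a \<otimes> v) = L a + L v" using minrep_add[OF J a v] .
  have "a \<otimes> \<one> \<preceq> a \<otimes> v" using le_factor[OF l le_refl[OF ac] one_le[OF vc]] .
  moreover have "\<one> \<otimes> v \<preceq> a \<otimes> v" using le_factor[OF l one_le[OF ac] le_refl[OF vc]] .
  ultimately show ?thesis using ac vc by simp
qed

lemma le_mr: assumes J: "J \<subseteq> S" and c: "minrep J c" and v: "v \<in> WJ J" and ac: "a \<preceq> c" and uv: "u \<preceq> v"
  shows "a \<otimes> u \<preceq> c \<otimes> v"
  using le_factor[OF minrep_add[OF J c v] ac uv] .

lemma le_WJ: assumes J: "J \<subseteq> S" and uv: "u \<preceq> v" and v: "v \<in> WJ J" shows "u \<in> WJ J"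
proof -
  have "supp G S u \<subseteq> supp G S v" using supp_mono[OF uv] .
  moreover have "supp G S v \<subseteq> J" using WJ_iff[OF J] v by auto
  ultimately show ?thesis using WJ_iff[OF J] le_carr[OF uv] by auto
qed

lemma covers_len: assumes "u \<in> P" "v \<in> P" "u \<preceq> v" "L v = L u + 1"
  shows "covers_in (\<preceq>) P u v"
  unfolding covers_in_def
proof (intro conjI)
  show "u \<noteq> v" using assms(4) by auto
  show "\<not> (\<exists>z\<in>P. u \<preceq> z \<and> z \<preceq> v \<and> z \<noteq> u \<and> z \<noteq> v)"
  proof
    assume "\<exists>z\<in>P. u \<preceq> z \<and> z \<preceq> v \<and> z \<noteq> u \<and> z \<noteq> v"
    then obtain z where "u \<preceq> z" "z \<preceq> v" "z \<noteq> u" "z \<noteq> v" by blast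
    then have "L u < L z" "L z < L v" using le_L_strict by auto
    then show False using assms(4) by simp
  qed
qed (use assms in auto)

lemma main:
  assumes J: "J \<subseteq> S" and s: "s \<in> S" and w: "w \<in> carrier G"
    and BP: "BP_decomposition G S J w"
    and I: "supp G S (par_min G S J w) \<inter> supp G S (par_comp G S J w) = {s}"
  shows "special_matching (\<preceq>) (bruhat_interval G S \<one> w)
           (\<lambda>x. par_min G S J x \<otimes> s \<otimes> par_comp G S J x)"
proof -
  define pm where "pm = par_min G S J"
  define pc where "pc = par_comp G S J"
  define P where "P = bruhat_interval G S \<one> w"
  define A where "A = pm w"
  define B where "B = pc w"
  have sc: "s \<in> carrier G" using s S_carr' by auto
  have D: "\<And>z. z \<in> carrier G \<Longrightarrow> minrep J (pm z) \<and> pc z \<in> WJ J \<and> z = pm z \<otimes> pc z"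
    unfolding pm_def pc_def using par_decomp[OF J] by blast
  have PM: "\<And>a v. minrep J a \<Longrightarrow> v \<in> WJ J \<Longrightarrow> pm (a \<otimes> v) = a \<and> pc (a \<otimes> v) = v"
    unfolding pm_def pc_def using par_min_eq[OF J] par_comp_eq[OF J] by blast
  have mc: "\<And>a. minrep J a \<Longrightarrow> a \<in> carrier G" using minrep_def by auto
  have vc: "\<And>v. v \<in> WJ J \<Longrightarrow> v \<in> carrier G" using WJ_carr[OF J] by blast
  have Amin: "minrep J A" and BW: "B \<in> WJ J" and wAB: "w = A \<otimes> B" using D[OF w] A_def B_def by auto
  have Ac: "A \<in> carrier G" and Bc: "B \<in> carrier G" using mc[OF Amin] vc[OF BW] by auto
  have LAB: "L (A \<otimes> B) = L A + L B" using minrep_add[OF J Amin BW] .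
  have I': "supp G S A \<inter> supp G S B = {s}" using I A_def B_def pm_def pc_def by simp
  have suppB: "supp G S B \<subseteq> J" using WJ_iff[OF J] BW by auto
  have sA: "s \<in> supp G S A" and sB: "s \<in> supp G S B" using I' by auto
  have sJ: "s \<in> J" using sB suppB by auto
  have sW: "s \<in> WJ J" using WJ_S[OF J sJ] .
  have BP': "supp G S A \<inter> J \<subseteq> left_descents G S B"
    using BP unfolding BP_decomposition_def A_def B_def pm_def pc_def by simp
  have desc: "L (s \<otimes> B) < L B" using BP' sA sJ unfolding left_descents_def by auto
  have AJ: "supp G S A \<inter> J \<subseteq> {s}"
  proof
    fix r assume r: "r \<in> supp G S A \<inter> J"
    then have "r \<in> S" "L (r \<otimes> B) < L B" using BP' unfolding left_descents_def by auto
    then have "r \<in> supp G S B" using desc_supp Bc by blast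
    then show "r \<in> {s}" using r I' by auto
  qed
  have one_s: "\<And>e. e \<preceq> A \<Longrightarrow> e \<in> WJ J \<Longrightarrow> e = \<one> \<or> e = s"
  proof -
    fix e assume eA: "e \<preceq> A" and eW: "e \<in> WJ J"
    have "supp G S e \<subseteq> supp G S A" using supp_mono[OF eA] .
    moreover have "supp G S e \<subseteq> J" using WJ_iff[OF J] eW by auto
    ultimately have "supp G S e \<subseteq> {s}" using AJ by auto
    then show "e = \<one> \<or> e = s" using supp_sub_single vc[OF eW] by blast
  qed
  have K: "\<And>y. y \<preceq> w \<Longrightarrow> pm y \<preceq> A \<and> pc y \<preceq> B"
  proof -
    fix y assume yw: "y \<preceq> w"
    obtain p' q' where pq: "p' \<preceq> A" "q' \<preceq> B" "y = p' \<otimes> q'"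
      using factor_le[OF Ac Bc LAB] yw wAB by blast
    have q'W: "q' \<in> WJ J" using le_WJ[OF J pq(2) BW] .
    have p'c: "p' \<in> carrier G" using le_carr pq(1) by auto
    have Dp: "minrep J (pm p')" "pc p' \<in> WJ J" "p' = pm p' \<otimes> pc p'" using D[OF p'c] by auto
    have y2: "y = pm p' \<otimes> (pc p' \<otimes> q')"
      using pq(3) Dp mc vc q'W by (metis m_assoc)
    have cq: "pc p' \<otimes> q' \<in> WJ J" using WJ_mult[OF J Dp(2) q'W] .
    have e1: "pm y = pm p'" and e2: "pc y = pc p' \<otimes> q'" using PM[OF Dp(1) cq] y2 by auto
    have MR: "pm p' \<preceq> p' \<and> pc p' \<preceq> p'" using MR_le[OF J Dp(1) Dp(2)] Dp(3) by simp
    have "pm y \<preceq> A" using e1 MR pq(1) le_trans by metis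
    moreover have "pc y \<preceq> B"
    proof -
      have "pc p' = \<one> \<or> pc p' = s" using one_s[OF le_trans[OF conjunct2[OF MR] pq(1)] Dp(2)] .
      then show ?thesis
      proof
        assume "pc p' = \<one>" then show ?thesis using e2 pq(2) vc[OF q'W] by simp
      next
        assume ps: "pc p' = s"
        have q'c: "q' \<in> carrier G" using vc[OF q'W] .
        have "s \<otimes> q' \<preceq> B"
        proof (cases "L (s \<otimes> q') < L q'")
          case True then show ?thesis using le_S_left'[OF s q'c] pq(2) le_trans by blast
        next
          case False
          then have "L q' < L (s \<otimes> q')" using L_T_neq[OF S_T[OF s] q'c] by linarith
          then show ?thesis using lifting[OF s pq(2) desc] by blast
        qed
        then show ?thesis using e2 ps by simp
      qed
    qed
    ultimately show "pm y \<preceq> A \<and> pc y \<preceq> B" by simp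
  qed
  define phi where "phi = (\<lambda>x. pm x \<otimes> s \<otimes> pc x)"
  have phi2: "\<And>x. x \<in> carrier G \<Longrightarrow> phi x = pm x \<otimes> (s \<otimes> pc x)"
    unfolding phi_def using D mc vc sc by (simp add: m_assoc)
  have inP: "\<And>x. x \<in> P \<longleftrightarrow> x \<preceq> w"
    unfolding P_def bruhat_interval_def using one_le le_carr by blast
  have xc: "\<And>x. x \<in> P \<Longrightarrow> x \<in> carrier G" using inP le_carr by blast
  have phi_facts: "\<And>x. x \<in> P \<Longrightarrow> pm (phi x) = pm x \<and> pc (phi x) = s \<otimes> pc x \<and> phi (phi x) = x
      \<and> phi x \<noteq> x \<and> phi x \<in> P \<and> ((phi x \<preceq> x \<and> L x = L (phi x) + 1) \<or> (x \<preceq> phi x \<and> L (phi x) = L x + 1))"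
  proof -
    fix x assume xP: "x \<in> P"
    have x: "x \<in> carrier G" using xc[OF xP] .
    let ?a = "pm x" and ?b = "pc x"
    have Dx: "minrep J ?a" "?b \<in> WJ J" "x = ?a \<otimes> ?b" using D[OF x] by auto
    have ac: "?a \<in> carrier G" and bc: "?b \<in> carrier G" using mc vc Dx by auto
    have sbW: "s \<otimes> ?b \<in> WJ J" using WJ_mult[OF J sW Dx(2)] .
    have sbc: "s \<otimes> ?b \<in> carrier G" using sc bc by simp
    have ph: "phi x = ?a \<otimes> (s \<otimes> ?b)" using phi2[OF x] .
    have pp: "pm (phi x) = ?a" "pc (phi x) = s \<otimes> ?b" using PM[OF Dx(1) sbW] ph by auto
    have pph: "phi (phi x) = x"
    proof -
      have "phi x \<in> carrier G" using ph ac sbc by simp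
      then have "phi (phi x) = ?a \<otimes> (s \<otimes> (s \<otimes> ?b))" using phi2 pp by simp
      also have "\<dots> = x" using T_ttx[OF S_T[OF s] bc] Dx(3)[symmetric] by simp
      finally show ?thesis .
    qed
    have ne: "phi x \<noteq> x"
    proof
      assume "phi x = x"
      then have "?a \<otimes> (s \<otimes> ?b) = ?a \<otimes> ?b" using ph Dx(3)[symmetric] by simp
      then have "s \<otimes> ?b = ?b" using ac bc sbc by simp
      then have "s = \<one>" using sc bc by simp
      then show False using s one_notin by simp
    qed
    have xw: "x \<preceq> w" using inP xP by simp
    have Kx: "?a \<preceq> A" "?b \<preceq> B" using K[OF xw] by auto
    have Lx: "L x = L ?a + L ?b" using minrep_add[OF J Dx(1) Dx(2)] Dx(3)[symmetric] by simp
    have Lph: "L (phi x) = L ?a + L (s \<otimes> ?b)" using minrep_add[OF J Dx(1) sbW] ph by simp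
    consider "L (s \<otimes> ?b) < L ?b" "L ?b = L (s \<otimes> ?b) + 1" | "L ?b < L (s \<otimes> ?b)" "L (s \<otimes> ?b) = L ?b + 1"
      using Sx_cases[OF s bc] by linarith
    then have rest: "phi x \<in> P \<and> ((phi x \<preceq> x \<and> L x = L (phi x) + 1) \<or> (x \<preceq> phi x \<and> L (phi x) = L x + 1))"
    proof cases
      case 1
      have sbb: "s \<otimes> ?b \<preceq> ?b" using le_S_left'[OF s bc 1(1)] .
      then have "phi x \<preceq> x" using le_mr[OF J Dx(1) Dx(2) le_refl[OF ac] sbb] ph Dx(3)[symmetric] by simp
      then show ?thesis using xw le_trans inP Lx Lph 1 by auto
    next
      case 2
      have bsb: "?b \<preceq> s \<otimes> ?b" using le_S_left[OF s bc 2(1)] .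
      then have "x \<preceq> phi x" using le_mr[OF J Dx(1) sbW le_refl[OF ac] bsb] ph Dx(3)[symmetric] by simp
      moreover have "s \<otimes> ?b \<preceq> B" using lifting[OF s Kx(2) desc 2(1)] by blast
      then have "phi x \<preceq> w" using le_factor[OF LAB Kx(1)] ph wAB by simp
      ultimately show ?thesis using inP Lx Lph 2 by auto
    qed
    show "pm (phi x) = pm x \<and> pc (phi x) = s \<otimes> pc x \<and> phi (phi x) = x
      \<and> phi x \<noteq> x \<and> phi x \<in> P \<and> ((phi x \<preceq> x \<and> L x = L (phi x) + 1) \<or> (x \<preceq> phi x \<and> L (phi x) = L x + 1))"
      using pp pph ne rest by blast
  qed
  have perfect: "perfect_matching (\<preceq>) P phi"
    unfolding perfect_matching_def
  proof
    fix x assume xP: "x \<in> P"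
    note f = phi_facts[OF xP]
    have "covers_in (\<preceq>) P x (phi x) \<or> covers_in (\<preceq>) P (phi x) x"
      using f covers_len[OF xP] covers_len[OF _ xP] by blast
    then show "phi x \<in> P \<and> phi (phi x) = x \<and> phi x \<noteq> x \<and>
             (covers_in (\<preceq>) P x (phi x) \<or> covers_in (\<preceq>) P (phi x) x)" using f by blast
  qed
  have special: "\<And>x y. covers_in (\<preceq>) P x y \<Longrightarrow> phi x = y \<or> (phi x \<preceq> phi y \<and> phi x \<noteq> phi y)"
  proof -
    fix x y assume cov: "covers_in (\<preceq>) P x y"
    then have xP: "x \<in> P" and yP: "y \<in> P" and xy: "x \<preceq> y" and nxy: "x \<noteq> y"
      and nz: "\<not> (\<exists>z\<in>P. x \<preceq> z \<and> z \<preceq> y \<and> z \<noteq> x \<and> z \<noteq> y)"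
      unfolding covers_in_def by auto
    have cv: "\<And>z. x \<preceq> z \<Longrightarrow> z \<preceq> y \<Longrightarrow> z = x \<or> z = y"
    proof -
      fix z assume "x \<preceq> z" "z \<preceq> y"
      moreover have "z \<in> P" using inP yP le_trans calculation(2) by blast
      ultimately show "z = x \<or> z = y" using nz by blast
    qed
    have x: "x \<in> carrier G" and y: "y \<in> carrier G" using xc xP yP by auto
    let ?a = "pm x" and ?b = "pc x" and ?c = "pm y" and ?d = "pc y"
    have Dx: "minrep J ?a" "?b \<in> WJ J" "x = ?a \<otimes> ?b" using D[OF x] by auto
    have Dy: "minrep J ?c" "?d \<in> WJ J" "y = ?c \<otimes> ?d" using D[OF y] by auto
    have ac: "?a \<in> carrier G" and bc: "?b \<in> carrier G" using mc vc Dx by auto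
    have cc: "?c \<in> carrier G" and dc: "?d \<in> carrier G" using mc vc Dy by auto
    have Ly: "L (?c \<otimes> ?d) = L ?c + L ?d" using minrep_add[OF J Dy(1) Dy(2)] .
    have yw: "y \<preceq> w" using inP yP by simp
    have cA: "?c \<preceq> A" using K[OF yw] by simp
    obtain c' d' where cd: "c' \<preceq> ?c" "d' \<preceq> ?d" "x = c' \<otimes> d'"
      using factor_le[OF cc dc Ly] xy Dy(3) by metis
    have d'W: "d' \<in> WJ J" using le_WJ[OF J cd(2) Dy(2)] .
    have d'c: "d' \<in> carrier G" using vc[OF d'W] .
    have c'c: "c' \<in> carrier G" using le_carr cd(1) by auto
    have Dc': "minrep J (pm c')" "pc c' \<in> WJ J" "c' = pm c' \<otimes> pc c'" using D[OF c'c] by auto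
    have ec: "pc c' \<in> carrier G" using vc[OF Dc'(2)] .
    have edW: "pc c' \<otimes> d' \<in> WJ J" using WJ_mult[OF J Dc'(2) d'W] .
    have x2: "x = pm c' \<otimes> (pc c' \<otimes> d')" using cd(3) Dc' mc ec d'c by (metis m_assoc)
    have ab: "?a = pm c'" "?b = pc c' \<otimes> d'" using PM[OF Dc'(1) edW] x2 by auto
    have MRc: "pm c' \<preceq> c' \<and> pc c' \<preceq> c'" using MR_le[OF J Dc'(1) Dc'(2)] Dc'(3) by simp
    have ac2: "?a \<preceq> ?c" using ab MRc cd(1) le_trans by metis
    have e_cases: "pc c' = \<one> \<or> pc c' = s"
      using one_s[OF le_trans[OF le_trans[OF conjunct2[OF MRc] cd(1)] cA] Dc'(2)] .
    have sdW: "s \<otimes> ?d \<in> WJ J" using WJ_mult[OF J sW Dy(2)] .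
    have sdc: "s \<otimes> ?d \<in> carrier G" using sc dc by simp
    have phx: "phi x = ?a \<otimes> (s \<otimes> ?b)" using phi2[OF x] .
    have phy: "phi y = ?c \<otimes> (s \<otimes> ?d)" using phi2[OF y] .
    show "phi x = y \<or> (phi x \<preceq> phi y \<and> phi x \<noteq> phi y)"
    proof (cases "?a = ?c")
      case True
      have Lc': "L c' = L ?a + L (pc c')" using minrep_add[OF J Dc'(1) Dc'(2)] Dc'(3) ab by simp
      have "L c' \<le> L ?c" using le_L[OF cd(1)] .
      then have "L (pc c') = 0" using Lc' True by simp
      then have e1: "pc c' = \<one>" using L_zero ec by simp
      have bd: "?b \<preceq> ?d" using ab e1 cd(2) d'c by simp
      have bnd: "?b \<noteq> ?d" using nxy Dx(3) Dy(3) True by metis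
      have cvb: "\<And>z. ?b \<preceq> z \<Longrightarrow> z \<preceq> ?d \<Longrightarrow> z = ?b \<or> z = ?d"
      proof -
        fix z assume bz: "?b \<preceq> z" and zd: "z \<preceq> ?d"
        have zW: "z \<in> WJ J" using le_WJ[OF J zd Dy(2)] .
        have zc: "z \<in> carrier G" using vc[OF zW] .
        have "x \<preceq> ?a \<otimes> z" using le_mr[OF J Dx(1) zW le_refl[OF ac] bz] Dx(3)[symmetric] by simp
        moreover have "?a \<otimes> z \<preceq> y" using le_mr[OF J Dx(1) Dy(2) le_refl[OF ac] zd] Dy(3)[symmetric] True by simp
        ultimately have "?a \<otimes> z = x \<or> ?a \<otimes> z = y" using cv by blast
        then have "?a \<otimes> z = ?a \<otimes> ?b \<or> ?a \<otimes> z = ?a \<otimes> ?d" using Dx(3) Dy(3) True by metis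
        then show "z = ?b \<or> z = ?d" using ac bc dc zc by (simp add: Units_eq)
      qed
      from left_mult_cover[OF s bd bnd cvb]
      show ?thesis
      proof
        assume "s \<otimes> ?b = ?d"
        then show ?thesis using phx Dy(3)[symmetric] True by simp
      next
        assume h: "s \<otimes> ?b \<preceq> s \<otimes> ?d \<and> s \<otimes> ?b \<noteq> s \<otimes> ?d"
        have "phi x \<preceq> phi y" using le_mr[OF J Dy(1) sdW _ conjunct1[OF h]] phx phy True le_refl[OF ac] by simp
        moreover have "phi x \<noteq> phi y" using h phx phy True ac sc bc dc by simp
        ultimately show ?thesis by simp
      qed
    next
      case False
      have phneq: "phi x \<noteq> phi y"
      proof
        assume "phi x = phi y"
        then have "pm (phi x) = pm (phi y)" by simp
        then show False using phi_facts[OF xP] phi_facts[OF yP] False by simp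
      qed
      have pmz: "\<And>u. u \<in> WJ J \<Longrightarrow> pm (?a \<otimes> u) = ?a" using PM[OF Dx(1)] by blast
      from e_cases show ?thesis
      proof
        assume e1: "pc c' = \<one>"
        then have bd': "?b = d'" using ab d'c by simp
        show ?thesis
        proof (cases "d' = ?d")
          case True
          have "phi x \<preceq> phi y" using le_mr[OF J Dy(1) sdW ac2 le_refl[OF sdc]] phx phy bd' True by simp
          then show ?thesis using phneq by simp
        next
          case dne: False
          have "x \<preceq> ?a \<otimes> ?d" using le_mr[OF J Dx(1) Dy(2) le_refl[OF ac] cd(2)] Dx(3)[symmetric] bd' by simp
          moreover have "?a \<otimes> ?d \<preceq> y" using le_mr[OF J Dy(1) Dy(2) ac2 le_refl[OF dc]] Dy(3)[symmetric] by simp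
          ultimately have "?a \<otimes> ?d = x \<or> ?a \<otimes> ?d = y" using cv by blast
          moreover have "?a \<otimes> ?d \<noteq> x"
          proof
            assume "?a \<otimes> ?d = x"
            then have "?a \<otimes> ?d = ?a \<otimes> d'" using Dx(3) bd' by metis
            then show False using dne ac dc d'c by (simp add: Units_eq)
          qed
          moreover have "?a \<otimes> ?d \<noteq> y"
          proof
            assume "?a \<otimes> ?d = y"
            then have "pm (?a \<otimes> ?d) = ?c" by simp
            then show False using pmz[OF Dy(2)] False by simp
          qed
          ultimately show ?thesis by blast
        qed
      next
        assume es: "pc c' = s"
        have bsd: "?b = s \<otimes> d'" using ab es by simp
        have phx2: "phi x = ?a \<otimes> d'" using phx bsd T_ttx[OF S_T[OF s] d'c] by simp
        have goal: "?a \<otimes> d' \<preceq> ?c \<otimes> (s \<otimes> ?d)" if "d' \<preceq> s \<otimes> ?d"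
          using le_mr[OF J Dy(1) sdW ac2 that] .
        consider "L ?d < L (s \<otimes> ?d)" | "L (s \<otimes> ?d) < L ?d"
          using L_T_neq[OF S_T[OF s] dc] by linarith
        then show ?thesis
        proof cases
          case 1
          have "d' \<preceq> s \<otimes> ?d" using cd(2) le_S_left[OF s dc 1] le_trans by blast
          then show ?thesis using goal phx2 phy phneq by simp
        next
          case 2
          consider "L d' < L (s \<otimes> d')" | "L (s \<otimes> d') < L d'"
            using L_T_neq[OF S_T[OF s] d'c] by linarith
          then show ?thesis
          proof cases
            case 1
            have "d' \<preceq> s \<otimes> ?d" using lifting[OF s cd(2) 2 1] by blast
            then show ?thesis using goal phx2 phy phneq by simp
          next
            case 3: 2
            have sdd: "s \<otimes> d' \<preceq> d'" using le_S_left'[OF s d'c 3] .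
            then have "x \<preceq> ?a \<otimes> d'" using le_mr[OF J Dx(1) d'W le_refl[OF ac] sdd] Dx(3)[symmetric] bsd by simp
            moreover have "?a \<otimes> d' \<preceq> y" using le_mr[OF J Dy(1) Dy(2) ac2 cd(2)] Dy(3)[symmetric] by simp
            ultimately have "?a \<otimes> d' = x \<or> ?a \<otimes> d' = y" using cv by blast
            moreover have "?a \<otimes> d' \<noteq> x"
            proof
              assume "?a \<otimes> d' = x"
              then have "?a \<otimes> d' = ?a \<otimes> (s \<otimes> d')" using Dx(3) bsd by metis
              then have "d' = s \<otimes> d'" using ac d'c sc by (simp add: Units_eq)
              then have "s = \<one>" using sc d'c by (metis r_cancel_one)
              then show False using s one_notin by simp
            qed
            moreover have "?a \<otimes> d' \<noteq> y"
            proof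
              assume "?a \<otimes> d' = y"
              then have "pm (?a \<otimes> d') = ?c" by simp
              then show False using pmz[OF d'W] False by simp
            qed
            ultimately show ?thesis by blast
          qed
        qed
      qed
    qed
  qed
  have "special_matching (\<preceq>) P phi"
    unfolding special_matching_def using perfect special by blast
  then show ?thesis unfolding P_def phi_def pm_def pc_def .
qed

end

theorem proposition6p1:
  fixes G :: "('a, 'b) monoid_scheme" and S J :: "'a set" and w s :: 'a
  assumes "coxeter_system G S"
    and "w \<in> carrier G"
    and "J \<subseteq> S"
    and "s \<in> S"
    and "BP_decomposition G S J w"
    and "supp G S (par_min G S J w) \<inter> supp G S (par_comp G S J w) = {s}"
  shows "special_matching (bruhat_le G S) (bruhat_interval G S \<one>\<^bsub>G\<^esub> w)
           (\<lambda>x. par_min G S J x \<otimes>\<^bsub>G\<^esub> s \<otimes>\<^bsub>G\<^esub> par_comp G S J x)"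
proof -
  interpret cox G S using assms(1) by (unfold_locales)
  show ?thesis using main[OF assms(3) assms(4) assms(2) assms(5) assms(6)] .
qed

end
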